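(* In a search game (as defined in the context), represented via cell-units, let $B$ be a set of cell-units (possibly of various players), let $a\notin B$ be another cell-unit, and let $s^{1}$ be a cell-unit strategy profile under which every member of $B$ is best-responding. Then there exists a finite sequence of cell-unit improvements $s^{1},\ldots,s^{T}$ such that every member of $B\cup\{a\}$ is best-responding under $s^{T}$.
   Context: A search game has: a finite set of players $N$; a finite set $\Omega$ of locations; for each player $i$ a partition $\Pi_i$ of $\Omega$; a prior $\mu\in\Delta(\Omega)$ with $\mu(\pi_i)>0$ for all cells, and $\mu(\omega|\pi_i)=\mu(\omega)/\mu(\pi_i)$ for $\omega\in\pi_i$; capacities $K_i\in\mathbb{N}$; costs $c_i:\{0,\ldots,K_i\}\to\mathbb{R}_{\ge0}$ with $c_i(0)=0$ and nondecreasing increments $c_i(k+1)-c_i(k)\ge c_i(k)-c_i(k-1)$; rewards $v_i^m(\omega)\ge0$ with $v_i^{m+1}(\omega)\le v_i^m(\omega)$. A cell-unit of player $i$ is a pair $(\pi_i,j)$ with $\pi_i\in\Pi_i$ and $j\in\{1,\ldots,K_i\}$. A cell-unit strategy profile assigns to every cell-unit $(\pi_i,j)$ of every player either a location in $\pi_i$ or the symbol $\lambda$ ("inactive"), such that two distinct cell-units of the same cell are never assigned the same location. It induces the ordinary profile $s$ with $s_i(\pi_i)$ = set of locations assigned to the cell-units of $\pi_i$; let $m_s(\omega)$ be the number of players $i$ with $\omega\in s_i(\pi_i)$ for the cell $\pi_i\ni\omega$. The payoff of the cell $\pi_i$ (and of each of its cell-units) is $u_i(s|\pi_i)=\sum_{\omega\in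 s_i(\pi_i)}\mu(\omega|\pi_i)v_i^{m_s(\omega)}(\omega)-c_i(|s_i(\pi_i)|)$. A cell-unit is best-responding if no change of its own assignment alone (to another location of its cell not assigned to another cell-unit of the same cell, or to $\lambda$), holding all other assignments fixed, strictly increases the payoff of its cell. A sequence of cell-unit improvements is a sequence of cell-unit profiles in which each consecutive pair differs only in the assignment of a single cell-unit, and this change strictly increases the payoff of that cell-unit's cell. *)

theory Defs
  imports Complex_Main
begin

text \<open>Search games. Players: set N of type 'i; locations: set Om of type 'w;
  Pi i: partition of Om for player i; mu: prior; K i: capacity; c i k: cost;
  v i m w: reward v_i^m(w).\<close>

definition search_game ::
  "'i set \<Rightarrow> 'w set \<Rightarrow> ('i \<Rightarrow> 'w set set) \<Rightarrow> ('w \<Rightarrow> real) \<Rightarrow> ('i \<Rightarrow> nat)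
   \<Rightarrow> ('i \<Rightarrow> nat \<Rightarrow> real) \<Rightarrow> ('i \<Rightarrow> nat \<Rightarrow> 'w \<Rightarrow> real) \<Rightarrow> bool" where
  "search_game N Om Pi mu K c v \<longleftrightarrow>
     finite N \<and> finite Om \<and>
     (\<forall>i\<in>N. (\<forall>p\<in>Pi i. p \<noteq> {} \<and> p \<subseteq> Om) \<and> \<Union>(Pi i) = Om \<and>
               (\<forall>p\<in>Pi i. \<forall>q\<in>Pi i. p \<noteq> q \<longrightarrow> p \<inter> q = {})) \<and>
     (\<forall>w\<in>Om. mu w \<ge> 0) \<and> sum mu Om = 1 \<and>
     (\<forall>i\<in>N. \<forall>p\<in>Pi i. sum mu p > 0) \<and>
     (\<forall>i\<in>N. c i 0 = 0 \<and> (\<forall>k\<le>K i. c i k \<ge> 0) \<and>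
        (\<forall>k. 1 \<le> k \<and> k + 1 \<le> K i \<longrightarrow> c i (k + 1) - c i k \<ge> c i k - c i (k - 1))) \<and>
     (\<forall>i\<in>N. \<forall>m\<ge>1. \<forall>w\<in>Om. v i m w \<ge> 0 \<and> v i (Suc m) w \<le> v i m w)"

definition cell_units :: "'i set \<Rightarrow> ('i \<Rightarrow> 'w set set) \<Rightarrow> ('i \<Rightarrow> nat) \<Rightarrow> ('i \<times> 'w set \<times> nat) set" where
  "cell_units N Pi K = {(i, p, j). i \<in> N \<and> p \<in> Pi i \<and> j \<in> {1..K i}}"

text \<open>A cell-unit strategy profile: sigma i p j = Some w (location w) or None (inactive, lambda).
  Outside of cell-units the value is fixed to None so that profiles are canonical.\<close>
type_synonym ('i, 'w) cu_profile = "'i \<Rightarrow> 'w set \<Rightarrow> nat \<Rightarrow> 'w option"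

definition cu_profile :: "'i set \<Rightarrow> ('i \<Rightarrow> 'w set set) \<Rightarrow> ('i \<Rightarrow> nat) \<Rightarrow> ('i, 'w) cu_profile \<Rightarrow> bool" where
  "cu_profile N Pi K s \<longleftrightarrow>
     (\<forall>i p j. (i, p, j) \<notin> cell_units N Pi K \<longrightarrow> s i p j = None) \<and>
     (\<forall>i p j w. (i, p, j) \<in> cell_units N Pi K \<and> s i p j = Some w \<longrightarrow> w \<in> p) \<and>
     (\<forall>i p j j'. (i, p, j) \<in> cell_units N Pi K \<and> (i, p, j') \<in> cell_units N Pi K \<and> j \<noteq> j'
        \<and> s i p j \<noteq> None \<longrightarrow> s i p j \<noteq> s i p j')"

definition induced :: "('i \<Rightarrow> nat) \<Rightarrow> ('i, 'w) cu_profile \<Rightarrow> 'i \<Rightarrow> 'w set \<Rightarrow> 'w set" where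
  "induced K s i p = {w. \<exists>j\<in>{1..K i}. s i p j = Some w}"

definition searchers :: "'i set \<Rightarrow> ('i \<Rightarrow> 'w set set) \<Rightarrow> ('i \<Rightarrow> nat) \<Rightarrow> ('i, 'w) cu_profile \<Rightarrow> 'w \<Rightarrow> nat" where
  "searchers N Pi K s w = card {i \<in> N. \<exists>p\<in>Pi i. w \<in> p \<and> w \<in> induced K s i p}"

definition cell_payoff ::
  "'i set \<Rightarrow> ('i \<Rightarrow> 'w set set) \<Rightarrow> ('w \<Rightarrow> real) \<Rightarrow> ('i \<Rightarrow> nat)
   \<Rightarrow> ('i \<Rightarrow> nat \<Rightarrow> real) \<Rightarrow> ('i \<Rightarrow> nat \<Rightarrow> 'w \<Rightarrow> real) \<Rightarrow> ('i, 'w) cu_profile \<Rightarrow> 'i \<Rightarrow> 'w set \<Rightarrow> real" where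
  "cell_payoff N Pi mu K c v s i p =
     (\<Sum>w\<in>induced K s i p. (mu w / sum mu p) * v i (searchers N Pi K s w) w)
     - c i (card (induced K s i p))"

definition admissible :: "('i \<Rightarrow> nat) \<Rightarrow> ('i, 'w) cu_profile \<Rightarrow> 'i \<Rightarrow> 'w set \<Rightarrow> nat \<Rightarrow> 'w option \<Rightarrow> bool" where
  "admissible K s i p j x \<longleftrightarrow>
     x = None \<or> (\<exists>w\<in>p. x = Some w \<and> (\<forall>j'\<in>{1..K i}. j' \<noteq> j \<longrightarrow> s i p j' \<noteq> Some w))"

definition upd_cu :: "('i, 'w) cu_profile \<Rightarrow> 'i \<Rightarrow> 'w set \<Rightarrow> nat \<Rightarrow> 'w option \<Rightarrow> ('i, 'w) cu_profile" where
  "upd_cu s i p j x = s(i := (s i)(p := (s i p)(j := x)))"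

definition best_responding ::
  "'i set \<Rightarrow> ('i \<Rightarrow> 'w set set) \<Rightarrow> ('w \<Rightarrow> real) \<Rightarrow> ('i \<Rightarrow> nat)
   \<Rightarrow> ('i \<Rightarrow> nat \<Rightarrow> real) \<Rightarrow> ('i \<Rightarrow> nat \<Rightarrow> 'w \<Rightarrow> real) \<Rightarrow> ('i, 'w) cu_profile
   \<Rightarrow> ('i \<times> 'w set \<times> nat) \<Rightarrow> bool" where
  "best_responding N Pi mu K c v s u \<longleftrightarrow>
     (case u of (i, p, j) \<Rightarrow>
        \<forall>x. admissible K s i p j x \<longrightarrow>
            \<not> (cell_payoff N Pi mu K c v (upd_cu s i p j x) i p > cell_payoff N Pi mu K c v s i p))"

definition cu_improvement ::
  "'i set \<Rightarrow> ('i \<Rightarrow> 'w set set) \<Rightarrow> ('w \<Rightarrow> real) \<Rightarrow> ('i \<Rightarrow> nat)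
   \<Rightarrow> ('i \<Rightarrow> nat \<Rightarrow> real) \<Rightarrow> ('i \<Rightarrow> nat \<Rightarrow> 'w \<Rightarrow> real) \<Rightarrow> ('i, 'w) cu_profile
   \<Rightarrow> ('i, 'w) cu_profile \<Rightarrow> bool" where
  "cu_improvement N Pi mu K c v s s' \<longleftrightarrow>
     (\<exists>i p j x. (i, p, j) \<in> cell_units N Pi K \<and> admissible K s i p j x \<and>
        s' = upd_cu s i p j x \<and>
        cell_payoff N Pi mu K c v s' i p > cell_payoff N Pi mu K c v s i p)"

end

theory Submission
  imports Defs
begin

locale ugame =
  fixes U :: "'u set" and cell :: "'u \<Rightarrow> 'c" and pos :: "'s \<Rightarrow> 'u \<Rightarrow> 'r"
    and load :: "'s \<Rightarrow> 'r \<Rightarrow> nat" and F :: "'c \<Rightarrow> 'r \<Rightarrow> nat \<Rightarrow> real"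
    and Opt :: "'s \<Rightarrow> 'u \<Rightarrow> 'r set" and mv :: "'s \<Rightarrow> 'u \<Rightarrow> 'r \<Rightarrow> 's"
    and valid :: "'s \<Rightarrow> bool" and Rs :: "'c \<Rightarrow> 'r set"
    and step :: "'s \<Rightarrow> 's \<Rightarrow> bool" and br :: "'s \<Rightarrow> 'u \<Rightarrow> bool"
  assumes finite_U: "finite U"
    and finite_Rs: "u \<in> U \<Longrightarrow> finite (Rs (cell u))"
    and pos_Rs: "valid s \<Longrightarrow> u \<in> U \<Longrightarrow> pos s u \<in> Rs (cell u)"
    and Opt_Rs: "valid s \<Longrightarrow> u \<in> U \<Longrightarrow> Opt s u \<subseteq> Rs (cell u)"
    and pos_notin_Opt: "valid s \<Longrightarrow> u \<in> U \<Longrightarrow> pos s u \<notin> Opt s u"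
    and load_pos: "valid s \<Longrightarrow> u \<in> U \<Longrightarrow> 1 \<le> load s (pos s u)"
    and F_mono: "u \<in> U \<Longrightarrow> r \<in> Rs (cell u) \<Longrightarrow> 1 \<le> n \<Longrightarrow> n \<le> m \<Longrightarrow> F (cell u) r m \<le> F (cell u) r n"
    and br_iff: "valid s \<Longrightarrow> u \<in> U \<Longrightarrow> br s u \<longleftrightarrow>
        (\<forall>q\<in>Opt s u. F (cell u) q (Suc (load s q)) \<le> F (cell u) (pos s u) (load s (pos s u)))"
    and mv_valid: "valid s \<Longrightarrow> u \<in> U \<Longrightarrow> q \<in> Opt s u \<Longrightarrow> valid (mv s u q)"
    and mv_step: "valid s \<Longrightarrow> u \<in> U \<Longrightarrow> q \<in> Opt s u \<Longrightarrow>
        F (cell u) q (Suc (load s q)) > F (cell u) (pos s u) (load s (pos s u)) \<Longrightarrow> step s (mv s u q)"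
    and pos_mv: "valid s \<Longrightarrow> u \<in> U \<Longrightarrow> q \<in> Opt s u \<Longrightarrow> v \<in> U \<Longrightarrow>
        pos (mv s u q) v = (if v = u then q else pos s v)"
    and load_mv: "valid s \<Longrightarrow> u \<in> U \<Longrightarrow> q \<in> Opt s u \<Longrightarrow>
        load (mv s u q) r = (if r = q then Suc (load s r) else if r = pos s u then load s r - 1 else load s r)"
    and Opt_mv_other: "valid s \<Longrightarrow> u \<in> U \<Longrightarrow> q \<in> Opt s u \<Longrightarrow> v \<in> U \<Longrightarrow> cell v \<noteq> cell u \<Longrightarrow>
        Opt (mv s u q) v = Opt s v"
    and Opt_mv_sib: "valid s \<Longrightarrow> u \<in> U \<Longrightarrow> q \<in> Opt s u \<Longrightarrow> v \<in> U \<Longrightarrow> cell v = cell u \<Longrightarrow>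
        Opt (mv s u q) v \<subseteq> insert (pos s u) (Opt s v)"
    and Opt_share: "valid s \<Longrightarrow> u \<in> U \<Longrightarrow> v \<in> U \<Longrightarrow> v \<noteq> u \<Longrightarrow> cell v = cell u \<Longrightarrow>
        q \<in> Opt s u \<Longrightarrow> q \<in> Opt s v \<or> q = pos s v"
begin

definition cv where "cv s u = F (cell u) (pos s u) (load s (pos s u))"
definition ov where "ov s u q = F (cell u) q (Suc (load s q))"

lemma br_iff': "valid s \<Longrightarrow> u \<in> U \<Longrightarrow> br s u \<longleftrightarrow> (\<forall>q\<in>Opt s u. ov s u q \<le> cv s u)"
  using br_iff by (simp add: cv_def ov_def)

lemma mv_step': "valid s \<Longrightarrow> u \<in> U \<Longrightarrow> q \<in> Opt s u \<Longrightarrow> ov s u q > cv s u \<Longrightarrow> step s (mv s u q)"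
  using mv_step by (simp add: cv_def ov_def)

lemma best_reply:
  assumes "valid s" "u \<in> U" "q \<in> Opt s u"
  shows "\<exists>b\<in>Opt s u. \<forall>q'\<in>Opt s u. ov s u q' \<le> ov s u b"
proof -
  have fin: "finite (Opt s u)" using finite_Rs[OF assms(2)] Opt_Rs[OF assms(1,2)] finite_subset by blast
  have ne: "ov s u ` Opt s u \<noteq> {}" using assms(3) by blast
  have "Max (ov s u ` Opt s u) \<in> ov s u ` Opt s u" using fin ne by (intro Max_in) auto
  then obtain b where b: "b \<in> Opt s u" "ov s u b = Max (ov s u ` Opt s u)" by auto
  have "\<forall>q'\<in>Opt s u. ov s u q' \<le> ov s u b" using fin b(2) by auto
  with b(1) show ?thesis by blast
qed

end

locale ugame_run = ugame +
  fixes s1 and M and a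
  assumes valid_s1: "valid s1" and M_U: "M \<subseteq> U" and a_M: "a \<in> M"
begin

definition L0 where "L0 = load s1"
definition V where "V u r = F (cell u) r (L0 r)"
definition W where "W u r = F (cell u) r (Suc (L0 r))"
definition cert where "cert s u \<longleftrightarrow> L0 (pos s u) = 0 \<or> (\<forall>q\<in>Opt s u. W u q \<le> V u (pos s u))"
definition stable where "stable s u \<longleftrightarrow> (\<forall>q\<in>Opt s u. W u q \<le> W u (pos s u))"
definition shape where "shape s T H \<longleftrightarrow> T \<noteq> H \<and>
   (\<forall>r. load s r + (if r = H then 1 else 0) = L0 r + (if r = T then 1 else 0))"
definition Inv where "Inv s T H \<longleftrightarrow> valid s \<and> shape s T H \<and> (\<forall>u\<in>M. cert s u)"
definition goal where "goal s \<longleftrightarrow> (\<exists>s'. step\<^sup>*\<^sup>* s s' \<and> (\<forall>u\<in>M. br s' u))"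

lemma goal_step: "step s s' \<Longrightarrow> goal s' \<Longrightarrow> goal s"
  unfolding goal_def by (meson converse_rtranclp_into_rtranclp)

lemma goal_here: "\<forall>u\<in>M. br s u \<Longrightarrow> goal s"
  unfolding goal_def by blast

lemma uU: "u \<in> M \<Longrightarrow> u \<in> U" using M_U by blast

lemma W_le_V: "u \<in> U \<Longrightarrow> r \<in> Rs (cell u) \<Longrightarrow> 1 \<le> L0 r \<Longrightarrow> W u r \<le> V u r"
  unfolding W_def V_def by (rule F_mono) auto

lemma V_cell: "cell v = cell u \<Longrightarrow> V v = V u" and W_cell: "cell v = cell u \<Longrightarrow> W v = W u"
  unfolding V_def W_def by (auto intro!: ext)

lemma shape_D: "shape s T H \<Longrightarrow> T \<noteq> H \<and> load s r + (if r = H then 1 else 0) = L0 r + (if r = T then 1 else 0)"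
  unfolding shape_def by blast
lemma shape_T: "shape s T H \<Longrightarrow> load s T = Suc (L0 T)"
  using shape_D[of s T H T] by auto
lemma shape_H: "shape s T H \<Longrightarrow> Suc (load s H) = L0 H"
  using shape_D[of s T H H] by auto
lemma shape_N: "shape s T H \<Longrightarrow> r \<noteq> T \<Longrightarrow> r \<noteq> H \<Longrightarrow> load s r = L0 r"
  using shape_D[of s T H r] by auto

lemma ov_le_W:
  assumes "valid s" "shape s T H" "u \<in> U" "q \<in> Opt s u" "q \<noteq> H"
  shows "ov s u q \<le> W u q"
proof -
  have "Suc (L0 q) \<le> Suc (load s q)"
    using assms shape_T[OF assms(2)] shape_N[OF assms(2)] by (cases "q = T") auto
  then show ?thesis unfolding ov_def W_def using assms Opt_Rs by (intro F_mono) auto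
qed

lemma ov_H: "shape s T H \<Longrightarrow> ov s u H = V u H"
  unfolding ov_def V_def using shape_H by simp

lemma cv_N: "valid s \<Longrightarrow> shape s T H \<Longrightarrow> u \<in> U \<Longrightarrow> pos s u \<noteq> T \<Longrightarrow> pos s u \<noteq> H \<Longrightarrow> cv s u = V u (pos s u)"
  unfolding cv_def V_def using shape_N by simp

lemma cv_T: "valid s \<Longrightarrow> shape s T H \<Longrightarrow> u \<in> U \<Longrightarrow> pos s u = T \<Longrightarrow> cv s u = W u T"
  unfolding cv_def W_def using shape_T by simp

lemma cv_H: "valid s \<Longrightarrow> shape s T H \<Longrightarrow> u \<in> U \<Longrightarrow> pos s u = H \<Longrightarrow> V u H \<le> cv s u"
proof -
  assume a: "valid s" "shape s T H" "u \<in> U" "pos s u = H"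
  have "F (cell u) H (load s H) \<ge> F (cell u) H (L0 H)"
    using shape_H[OF a(2)] load_pos[OF a(1,3)] pos_Rs[OF a(1,3)] a(3,4) by (intro F_mono) auto
  then show ?thesis unfolding cv_def V_def using a(4) by simp
qed

lemma L0_N: "valid s \<Longrightarrow> shape s T H \<Longrightarrow> u \<in> U \<Longrightarrow> pos s u \<noteq> T \<Longrightarrow> 1 \<le> L0 (pos s u)"
  using shape_N[of s T H "pos s u"] shape_H[of s T H] load_pos[of s u] by (cases "pos s u = H") auto

lemma L0_H: "shape s T H \<Longrightarrow> 1 \<le> L0 H"
  using shape_H by fastforce


lemma argmin_ex:
  fixes f :: "'a \<Rightarrow> real"
  assumes "finite A" "x \<in> A"
  shows "\<exists>v\<in>A. \<forall>w\<in>A. f v \<le> f w"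
proof -
  have ne: "f ` A \<noteq> {}" using assms(2) by blast
  have "Min (f ` A) \<in> f ` A" using assms(1) ne by (intro Min_in) auto
  then obtain v where v: "v \<in> A" "f v = Min (f ` A)" by auto
  have "\<forall>w\<in>A. f v \<le> f w" using assms(1) v(2) by auto
  with v(1) show ?thesis by blast
qed

context
  fixes s u q
  assumes vs: "valid s" and uM: "u \<in> M" and qO: "q \<in> Opt s u"
begin

lemma uU': "u \<in> U" using uM uU by blast

lemma q_ne_pos: "q \<noteq> pos s u" using pos_notin_Opt[OF vs uU'] qO by blast

lemma pos_mv_self: "pos (mv s u q) u = q" using pos_mv[OF vs uU' qO uU'] by simp

lemma pos_mv_other: "v \<in> U \<Longrightarrow> v \<noteq> u \<Longrightarrow> pos (mv s u q) v = pos s v"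
  using pos_mv[OF vs uU' qO] by simp

lemma valid_mv: "valid (mv s u q)" using mv_valid[OF vs uU' qO] .

lemma cert_other: "v \<in> M \<Longrightarrow> cell v \<noteq> cell u \<Longrightarrow> cert s v \<Longrightarrow> cert (mv s u q) v"
proof -
  assume a: "v \<in> M" "cell v \<noteq> cell u" "cert s v"
  then have "v \<noteq> u" "v \<in> U" using uU by auto
  then show ?thesis using a unfolding cert_def using pos_mv_other[of v] Opt_mv_other[OF vs uU' qO, of v] by simp
qed

lemma cert_sib:
  assumes "v \<in> M" "v \<noteq> u" "cell v = cell u" "cert s v"
    and "1 \<le> L0 (pos s v) \<Longrightarrow> W u (pos s u) \<le> V u (pos s v)"
  shows "cert (mv s u q) v"
proof -
  have vU: "v \<in> U" using assms(1) uU by blast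
  have p: "pos (mv s u q) v = pos s v" using pos_mv_other[OF vU assms(2)] .
  have O: "Opt (mv s u q) v \<subseteq> insert (pos s u) (Opt s v)" using Opt_mv_sib[OF vs uU' qO vU assms(3)] .
  show ?thesis
  proof (cases "L0 (pos s v) = 0")
    case True then show ?thesis unfolding cert_def p by simp
  next
    case False
    then have c: "\<forall>x\<in>Opt s v. W v x \<le> V v (pos s v)" using assms(4) unfolding cert_def by simp
    have "W u (pos s u) \<le> V u (pos s v)" using assms(5) False by simp
    then show ?thesis unfolding cert_def p using c O W_cell[OF assms(3)] V_cell[OF assms(3)] by auto
  qed
qed

lemma cert_self:
  assumes "1 \<le> L0 q \<Longrightarrow> (\<forall>q'\<in>Opt s u. q' \<noteq> q \<longrightarrow> W u q' \<le> V u q) \<and> W u (pos s u) \<le> V u q"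
  shows "cert (mv s u q) u"
proof (cases "L0 q = 0")
  case True then show ?thesis unfolding cert_def pos_mv_self by simp
next
  case False
  have O: "Opt (mv s u q) u \<subseteq> insert (pos s u) (Opt s u)" using Opt_mv_sib[OF vs uU' qO uU'] by simp
  have nq: "q \<notin> Opt (mv s u q) u" using pos_notin_Opt[OF valid_mv uU'] pos_mv_self by simp
  show ?thesis unfolding cert_def pos_mv_self using assms False O nq by fastforce
qed

lemma stable_other: "v \<in> M \<Longrightarrow> cell v \<noteq> cell u \<Longrightarrow> stable s v \<Longrightarrow> stable (mv s u q) v"
proof -
  assume a: "v \<in> M" "cell v \<noteq> cell u" "stable s v"
  then have "v \<noteq> u" "v \<in> U" using uU by auto
  then show ?thesis using a unfolding stable_def using pos_mv_other[of v] Opt_mv_other[OF vs uU' qO, of v] by simp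
qed

lemma stable_sib:
  assumes "v \<in> M" "v \<noteq> u" "cell v = cell u" "stable s v"
    and "W u (pos s u) \<le> W u (pos s v)"
  shows "stable (mv s u q) v"
proof -
  have vU: "v \<in> U" using assms(1) uU by blast
  have p: "pos (mv s u q) v = pos s v" using pos_mv_other[OF vU assms(2)] .
  have O: "Opt (mv s u q) v \<subseteq> insert (pos s u) (Opt s v)" using Opt_mv_sib[OF vs uU' qO vU assms(3)] .
  show ?thesis unfolding stable_def p using assms(4,5) O W_cell[OF assms(3)] unfolding stable_def by auto
qed

lemma load_mv': "load (mv s u q) r = (if r = q then Suc (load s r) else if r = pos s u then load s r - 1 else load s r)"
  using load_mv[OF vs uU' qO] .

lemma shape_TN:
  assumes "shape s T H" "pos s u = T" "q \<noteq> H"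
  shows "shape (mv s u q) q H"
proof -
  have "load (mv s u q) r + (if r = H then 1 else 0) = L0 r + (if r = q then 1 else 0)" for r
    using shape_D[OF assms(1), of r] load_mv'[of r] assms(2,3) q_ne_pos by auto
  then show ?thesis unfolding shape_def using assms(3) by auto
qed

lemma shape_NH:
  assumes "shape s T H" "pos s u \<noteq> T" "pos s u \<noteq> H" "q = H"
  shows "shape (mv s u q) T (pos s u)"
proof -
  have "load (mv s u q) r + (if r = pos s u then 1 else 0) = L0 r + (if r = T then 1 else 0)" for r
    using shape_D[OF assms(1), of r] shape_D[OF assms(1), of "pos s u"] load_mv'[of r] assms(2,3,4)
      load_pos[OF vs uU'] by auto
  then show ?thesis unfolding shape_def using assms(2) by auto
qed

lemma bal_TH:
  assumes "shape s T H" "pos s u = T" "q = H"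
  shows "load (mv s u q) r = L0 r"
  using shape_D[OF assms(1), of r] load_mv'[of r] assms by auto

lemma shape_init:
  assumes "s = s1"
  shows "shape (mv s u q) q (pos s u)"
proof -
  have "load (mv s u q) r + (if r = pos s u then 1 else 0) = L0 r + (if r = q then 1 else 0)" for r
    using load_mv'[of r] assms q_ne_pos load_pos[OF vs uU'] unfolding L0_def by auto
  then show ?thesis unfolding shape_def using q_ne_pos by auto
qed

end

lemma balanced_happy:
  assumes "valid s" "\<forall>r. load s r = L0 r" "\<forall>u\<in>M. cert s u"
  shows "\<forall>u\<in>M. br s u"
proof
  fix u assume uM: "u \<in> M"
  then have uU: "u \<in> U" using uU by blast
  have l: "1 \<le> L0 (pos s u)" using load_pos[OF assms(1) uU] assms(2) by simp
  then have c: "\<forall>x\<in>Opt s u. W u x \<le> V u (pos s u)" using assms(3) uM unfolding cert_def by auto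
  show "br s u" unfolding br_iff'[OF assms(1) uU] cv_def ov_def
    using c assms(2) unfolding W_def V_def by simp
qed

definition rkV where "rkV u r = card {r'\<in>Rs (cell u). V u r' > V u r}"
definition rkW where "rkW u r = card {r'\<in>Rs (cell u). W u r' > W u r}"
definition muV where "muV s = (\<Sum>v\<in>M. rkV v (pos s v))"
definition muW where "muW s = (\<Sum>v\<in>M. rkW v (pos s v))"

lemma rk_less:
  fixes f :: "'r \<Rightarrow> real"
  assumes "finite R" "r' \<in> R" "f r' > f r"
  shows "card {x\<in>R. f x > f r'} < card {x\<in>R. f x > f r}"
proof (rule psubset_card_mono)
  show "finite {x\<in>R. f x > f r}" using assms(1) by simp
  show "{x\<in>R. f x > f r'} \<subset> {x\<in>R. f x > f r}" using assms by auto
qed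

lemma mu_dec:
  fixes g :: "_ \<Rightarrow> _ \<Rightarrow> nat"
  assumes vs: "valid s" and uM: "u \<in> M" and qO: "q \<in> Opt s u" and lt: "g u q < g u (pos s u)"
  shows "(\<Sum>v\<in>M. g v (pos (mv s u q) v)) < (\<Sum>v\<in>M. g v (pos s v))"
proof -
  have fM: "finite M" using finite_U M_U finite_subset by blast
  have eq: "(\<Sum>v\<in>M - {u}. g v (pos (mv s u q) v)) = (\<Sum>v\<in>M - {u}. g v (pos s v))"
    using pos_mv_other[OF vs uM qO] uU by (intro sum.cong) auto
  have "(\<Sum>v\<in>M. g v (pos (mv s u q) v)) = g u q + (\<Sum>v\<in>M - {u}. g v (pos (mv s u q) v))"
    using sum.remove[OF fM uM, of "\<lambda>v. g v (pos (mv s u q) v)"] pos_mv_self[OF vs uM qO] by simp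
  also have "\<dots> < g u (pos s u) + (\<Sum>v\<in>M - {u}. g v (pos s v))" using eq lt by simp
  also have "\<dots> = (\<Sum>v\<in>M. g v (pos s v))" using sum.remove[OF fM uM, of "\<lambda>v. g v (pos s v)"] by simp
  finally show ?thesis .
qed


lemma rkV_less: "u \<in> U \<Longrightarrow> r' \<in> Rs (cell u) \<Longrightarrow> V u r' > V u r \<Longrightarrow> rkV u r' < rkV u r"
  unfolding rkV_def by (rule rk_less[OF finite_Rs])
lemma rkW_less: "u \<in> U \<Longrightarrow> r' \<in> Rs (cell u) \<Longrightarrow> W u r' > W u r \<Longrightarrow> rkW u r' < rkW u r"
  unfolding rkW_def by (rule rk_less[OF finite_Rs])

lemma finite_M: "finite M" using finite_U M_U finite_subset by blast

lemma phase2: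
  assumes "Inv s T H" "\<forall>u\<in>M. pos s u = T \<longrightarrow> stable s u"
  shows "goal s"
  using assms
proof (induction "muV s" arbitrary: s T H rule: less_induct)
  case less
  have vs: "valid s" and sh: "shape s T H" and ce: "\<forall>u\<in>M. cert s u"
    using less.prems(1) unfolding Inv_def by auto
  have st: "\<forall>u\<in>M. pos s u = T \<longrightarrow> stable s u" using less.prems(2) .
  have TH: "T \<noteq> H" using shape_D[OF sh] by blast
  show ?case
  proof (cases "\<forall>u\<in>M. br s u")
    case True then show ?thesis by (rule goal_here)
  next
    case False
    then obtain u where uM: "u \<in> M" and nb: "\<not> br s u" by blast
    have uU: "u \<in> U" using uM uU by blast
    obtain q where qO: "q \<in> Opt s u" and qgt: "ov s u q > cv s u"
      using nb br_iff'[OF vs uU] by (auto simp: not_le)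
    have posH: "pos s u \<noteq> H"
    proof
      assume pH: "pos s u = H"
      have "q \<noteq> H" using pos_notin_Opt[OF vs uU] qO pH by auto
      then have "ov s u q \<le> W u q" using ov_le_W[OF vs sh uU qO] by simp
      also have "W u q \<le> V u H" using ce uM qO pH L0_H[OF sh] unfolding cert_def by auto
      also have "V u H \<le> cv s u" using cv_H[OF vs sh uU pH] .
      finally show False using qgt by simp
    qed
    have qH: "q = H"
    proof (rule ccontr)
      assume qH: "q \<noteq> H"
      have ovW: "ov s u q \<le> W u q" using ov_le_W[OF vs sh uU qO qH] .
      show False
      proof (cases "pos s u = T")
        case True
        have "W u q \<le> W u T" using st uM True qO unfolding stable_def by auto
        then show False using ovW qgt cv_T[OF vs sh uU True] by simp
      next
        case False
        have l: "1 \<le> L0 (pos s u)" using L0_N[OF vs sh uU False] .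
        have "W u q \<le> V u (pos s u)" using ce uM qO l unfolding cert_def by auto
        then show False using ovW qgt cv_N[OF vs sh uU False posH] by simp
      qed
    qed
    have HO: "H \<in> Opt s u" using qO qH by simp
    have VHgt: "V u H > cv s u" using qgt qH ov_H[OF sh] by simp
    define Cand where "Cand = {v\<in>M. cell v = cell u \<and> pos s v \<noteq> H}"
    have fC: "finite Cand" unfolding Cand_def using finite_M by simp
    have uC: "u \<in> Cand" unfolding Cand_def using uM posH by simp
    obtain v where vC: "v \<in> Cand" and vmin: "\<forall>w\<in>Cand. cv s v \<le> cv s w"
      using argmin_ex[OF fC uC, of "cv s"] by blast
    have vM: "v \<in> M" and cvu: "cell v = cell u" and vH: "pos s v \<noteq> H" using vC unfolding Cand_def by auto
    have vU: "v \<in> U" using vM M_U by blast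
    have HOv: "H \<in> Opt s v"
    proof (cases "v = u")
      case True then show ?thesis using HO by simp
    next
      case False then show ?thesis using Opt_share[OF vs uU vU False cvu HO] vH by auto
    qed
    have cvv: "cv s v \<le> cv s u" using vmin uC by blast
    have Vv: "V v = V u" "W v = W u" using V_cell[OF cvu] W_cell[OF cvu] by auto
    have VHv: "V v H > cv s v" using VHgt cvv Vv by simp
    have ovH: "ov s v H = V v H" using ov_H[OF sh] .
    have stp: "step s (mv s v H)" using mv_step'[OF vs vU HOv] VHv ovH by simp
    define s' where "s' = mv s v H"
    have vs': "valid s'" unfolding s'_def using valid_mv[OF vs vM HOv] .
    show ?thesis
    proof (cases "pos s v = T")
      case vT: True
      have cvT: "cv s v = W v T" using cv_T[OF vs sh vU vT] .
      have bal: "\<forall>r. load s' r = L0 r" unfolding s'_def using bal_TH[OF vs vM HOv sh vT] by simp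
      have ce': "\<forall>w\<in>M. cert s' w"
      proof
        fix w assume wM: "w \<in> M"
        show "cert s' w"
        proof (cases "w = v")
          case True
          show ?thesis unfolding s'_def True
          proof (rule cert_self[OF vs vM HOv])
            have "\<forall>q'\<in>Opt s v. q' \<noteq> H \<longrightarrow> W v q' \<le> V v H"
              using st vM vT cvT VHv unfolding stable_def by (metis order.trans less_eq_real_def)
            moreover have "W v (pos s v) \<le> V v H" using vT cvT VHv by simp
            ultimately show "(\<forall>q'\<in>Opt s v. q' \<noteq> H \<longrightarrow> W v q' \<le> V v H) \<and> W v (pos s v) \<le> V v H" by simp
          qed
        next
          case wv: False
          show ?thesis
          proof (cases "cell w = cell v")
            case False then show ?thesis unfolding s'_def using cert_other[OF vs vM HOv wM False] ce wM by simp
          next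
            case cwv: True
            show ?thesis unfolding s'_def
            proof (rule cert_sib[OF vs vM HOv wM wv cwv])
              show "cert s w" using ce wM by simp
              assume l: "1 \<le> L0 (pos s w)"
              have wU: "w \<in> U" using wM M_U by blast
              show "W v (pos s v) \<le> V v (pos s w)"
              proof (cases "pos s w = H")
                case True then show ?thesis using vT cvT VHv by simp
              next
                case wH: False
                have wC: "w \<in> Cand" unfolding Cand_def using wM cwv cvu wH by simp
                have le: "cv s v \<le> cv s w" using vmin wC by blast
                show ?thesis
                proof (cases "pos s w = T")
                  case True
                  have "W v T \<le> V v T" using W_le_V[OF vU] pos_Rs[OF vs wU] cwv l True by simp
                  then show ?thesis using vT True by simp
                next
                  case False
                  have "cv s w = V w (pos s w)" using cv_N[OF vs sh wU False wH] .
                  then show ?thesis using le cvT vT V_cell[OF cwv] by simp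
                qed
              qed
            qed
          qed
        qed
      qed
      have "\<forall>w\<in>M. br s' w" using balanced_happy[OF vs' bal ce'] .
      then have "goal s'" by (rule goal_here)
      then show ?thesis using goal_step stp unfolding s'_def by blast
    next
      case vT: False
      define x where "x = pos s v"
      have cvx: "cv s v = V v x" unfolding x_def using cv_N[OF vs sh vU vT vH] .
      have lx: "1 \<le> L0 x" unfolding x_def using L0_N[OF vs sh vU vT] .
      have xR: "x \<in> Rs (cell v)" unfolding x_def using pos_Rs[OF vs vU] .
      have WxVx: "W v x \<le> V v x" using W_le_V[OF vU xR lx] .
      have sh': "shape s' T x" unfolding s'_def x_def using shape_NH[OF vs vM HOv sh vT vH] by simp
      have ce': "\<forall>w\<in>M. cert s' w"
      proof
        fix w assume wM: "w \<in> M"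
        show "cert s' w"
        proof (cases "w = v")
          case True
          show ?thesis unfolding s'_def True
          proof (rule cert_self[OF vs vM HOv])
            have "\<forall>q'\<in>Opt s v. W v q' \<le> V v x" using ce vM lx unfolding cert_def x_def by auto
            then have "\<forall>q'\<in>Opt s v. q' \<noteq> H \<longrightarrow> W v q' \<le> V v H" using VHv cvx by (metis order.trans less_eq_real_def)
            moreover have "W v (pos s v) \<le> V v H" using WxVx VHv cvx x_def by simp
            ultimately show "(\<forall>q'\<in>Opt s v. q' \<noteq> H \<longrightarrow> W v q' \<le> V v H) \<and> W v (pos s v) \<le> V v H" by simp
          qed
        next
          case wv: False
          show ?thesis
          proof (cases "cell w = cell v")
            case False then show ?thesis unfolding s'_def using cert_other[OF vs vM HOv wM False] ce wM by simp
          next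
            case cwv: True
            show ?thesis unfolding s'_def
            proof (rule cert_sib[OF vs vM HOv wM wv cwv])
              show "cert s w" using ce wM by simp
              assume l: "1 \<le> L0 (pos s w)"
              have wU: "w \<in> U" using wM M_U by blast
              show "W v (pos s v) \<le> V v (pos s w)"
              proof (cases "pos s w = H")
                case True then show ?thesis using WxVx cvx VHv x_def by simp
              next
                case wH: False
                have wC: "w \<in> Cand" unfolding Cand_def using wM cwv cvu wH by simp
                have le: "cv s v \<le> cv s w" using vmin wC by blast
                show ?thesis
                proof (cases "pos s w = T")
                  case True
                  have "W v T \<le> V v T" using W_le_V[OF vU] pos_Rs[OF vs wU] cwv l True by simp
                  moreover have "cv s w = W w T" using cv_T[OF vs sh wU True] .
                  ultimately show ?thesis using le cvx WxVx True W_cell[OF cwv] x_def by simp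
                next
                  case False
                  have "cv s w = V w (pos s w)" using cv_N[OF vs sh wU False wH] .
                  then show ?thesis using le cvx WxVx V_cell[OF cwv] x_def by simp
                qed
              qed
            qed
          qed
        qed
      qed
      have st': "\<forall>w\<in>M. pos s' w = T \<longrightarrow> stable s' w"
      proof (intro ballI impI)
        fix w assume wM: "w \<in> M" and wT: "pos s' w = T"
        have wU: "w \<in> U" using wM M_U by blast
        have wv: "w \<noteq> v" using wT pos_mv_self[OF vs vM HOv] TH unfolding s'_def by auto
        have pw: "pos s w = T" using wT pos_mv_other[OF vs vM HOv wU wv] unfolding s'_def by simp
        have sw: "stable s w" using st wM pw by simp
        show "stable s' w"
        proof (cases "cell w = cell v")
          case False then show ?thesis unfolding s'_def using stable_other[OF vs vM HOv wM False sw] by simp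
        next
          case cwv: True
          have wC: "w \<in> Cand" unfolding Cand_def using wM cwv cvu pw TH by simp
          have le: "cv s v \<le> cv s w" using vmin wC by blast
          have "cv s w = W w T" using cv_T[OF vs sh wU pw] .
          then have "W v x \<le> W v (pos s w)" using le cvx WxVx pw W_cell[OF cwv] by simp
          then show ?thesis unfolding s'_def using stable_sib[OF vs vM HOv wM wv cwv sw] x_def by simp
        qed
      qed
      have Inv': "Inv s' T x" unfolding Inv_def using vs' sh' ce' by simp
      have HR: "H \<in> Rs (cell v)" using Opt_Rs[OF vs vU] HOv by blast
      have "rkV v H < rkV v (pos s v)" using rkV_less[OF vU HR] VHv cvx x_def by simp
      then have "muV s' < muV s" unfolding muV_def s'_def by (rule mu_dec[OF vs vM HOv, of rkV])
      then have "goal s'" using less.hyps[OF _ Inv' st'] by simp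
      then show ?thesis using goal_step stp unfolding s'_def by blast
    qed
  qed
qed


lemma cert_from_br: "u \<in> M \<Longrightarrow> br s1 u \<Longrightarrow> cert s1 u"
proof -
  assume uM: "u \<in> M" and b: "br s1 u"
  have uU: "u \<in> U" using uM M_U by blast
  have "\<forall>x\<in>Opt s1 u. ov s1 u x \<le> cv s1 u" using b br_iff'[OF valid_s1 uU] by simp
  then show ?thesis unfolding cert_def ov_def cv_def W_def V_def L0_def by simp
qed

lemma phase1:
  assumes "Inv s T H"
  shows "goal s"
  using assms
proof (induction "muW s" arbitrary: s T H rule: less_induct)
  case less
  have vs: "valid s" and sh: "shape s T H" and ce: "\<forall>u\<in>M. cert s u"
    using less.prems(1) unfolding Inv_def by auto
  have TH: "T \<noteq> H" using shape_D[OF sh] by blast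
  show ?case
  proof (cases "\<exists>u\<in>M. pos s u = T \<and> \<not> stable s u")
    case False
    then have "\<forall>u\<in>M. pos s u = T \<longrightarrow> stable s u" by blast
    then show ?thesis using phase2 less.prems(1) by blast
  next
    case True
    then obtain u where uM: "u \<in> M" and uT: "pos s u = T" and ns: "\<not> stable s u" by blast
    have uU: "u \<in> U" using uM M_U by blast
    obtain q where qO: "q \<in> Opt s u" and Wq: "W u q > W u T"
      using ns uT unfolding stable_def by (auto simp: not_le)
    have cvT: "cv s u = W u T" using cv_T[OF vs sh uU uT] .
    have qT: "q \<noteq> T" using pos_notin_Opt[OF vs uU] qO uT by auto
    have WovH: "W u H \<le> ov s u H" if "H \<in> Opt s u"
      using W_le_V[OF uU _ L0_H[OF sh]] Opt_Rs[OF vs uU] that ov_H[OF sh] by auto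
    have ovN: "ov s u x = W u x" if "x \<noteq> T" "x \<noteq> H" for x
      unfolding ov_def W_def using shape_N[OF sh that] by simp
    have Wle_ov: "W u x \<le> ov s u x" if "x \<in> Opt s u" for x
    proof -
      have "x \<noteq> T" using pos_notin_Opt[OF vs uU] that uT by auto
      then show ?thesis using WovH ovN that by (cases "x = H") auto
    qed
    have ovq: "ov s u q > cv s u" using Wle_ov[OF qO] Wq cvT by simp
    obtain b where bO: "b \<in> Opt s u" and bmax: "\<forall>x\<in>Opt s u. ov s u x \<le> ov s u b"
      using best_reply[OF vs uU qO] by blast
    have bT: "b \<noteq> T" using pos_notin_Opt[OF vs uU] bO uT by auto
    have ovb: "ov s u b > cv s u" using bmax qO ovq by force
    have stp: "step s (mv s u b)" using mv_step'[OF vs uU bO ovb] .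
    define s' where "s' = mv s u b"
    have vs': "valid s'" unfolding s'_def using valid_mv[OF vs uM bO] .
    show ?thesis
    proof (cases "b = H")
      case bH: True
      have bal: "\<forall>r. load s' r = L0 r" unfolding s'_def using bal_TH[OF vs uM bO sh uT bH] by simp
      have VH: "ov s u b = V u H" using ov_H[OF sh] bH by simp
      have ce': "\<forall>w\<in>M. cert s' w"
      proof
        fix w assume wM: "w \<in> M"
        show "cert s' w"
        proof (cases "w = u")
          case True
          show ?thesis unfolding s'_def True
          proof (rule cert_self[OF vs uM bO])
            have "\<forall>q'\<in>Opt s u. q' \<noteq> b \<longrightarrow> W u q' \<le> V u b"
            proof (intro ballI impI)
              fix q' assume "q' \<in> Opt s u" "q' \<noteq> b"
              assume q'O: "q' \<in> Opt s u"
              have "W u q' \<le> ov s u q'" using Wle_ov[OF q'O] .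
              also have "\<dots> \<le> ov s u b" using bmax q'O by blast
              finally show "W u q' \<le> V u b" using VH bH by simp
            qed
            moreover have "W u (pos s u) \<le> V u b" using uT cvT ovb VH bH by simp
            ultimately show "(\<forall>q'\<in>Opt s u. q' \<noteq> b \<longrightarrow> W u q' \<le> V u b) \<and> W u (pos s u) \<le> V u b" by simp
          qed
        next
          case wu: False
          show ?thesis
          proof (cases "cell w = cell u")
            case False then show ?thesis unfolding s'_def using cert_other[OF vs uM bO wM False] ce wM by simp
          next
            case cwu: True
            show ?thesis unfolding s'_def
            proof (rule cert_sib[OF vs uM bO wM wu cwu])
              show "cert s w" using ce wM by simp
              assume l: "1 \<le> L0 (pos s w)"
              have wU: "w \<in> U" using wM M_U by blast
              have "q \<in> Opt s w \<or> q = pos s w" using Opt_share[OF vs uU wU wu cwu qO] .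
              then show "W u (pos s u) \<le> V u (pos s w)"
              proof
                assume "q \<in> Opt s w"
                then have "W w q \<le> V w (pos s w)" using ce wM l unfolding cert_def by auto
                then show ?thesis using Wq uT W_cell[OF cwu] V_cell[OF cwu] by simp
              next
                assume qw: "q = pos s w"
                have "W u q \<le> V u q" using W_le_V[OF uU] Opt_Rs[OF vs uU] qO l qw by auto
                then show ?thesis using Wq uT qw by simp
              qed
            qed
          qed
        qed
      qed
      have "\<forall>w\<in>M. br s' w" using balanced_happy[OF vs' bal ce'] .
      then have "goal s'" by (rule goal_here)
      then show ?thesis using goal_step stp unfolding s'_def by blast
    next
      case bH: False
      have ovbW: "ov s u b = W u b" using ovN[OF bT bH] .
      have sh': "shape s' b H" unfolding s'_def using shape_TN[OF vs uM bO sh uT bH] .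
      have ce': "\<forall>w\<in>M. cert s' w"
      proof
        fix w assume wM: "w \<in> M"
        show "cert s' w"
        proof (cases "w = u")
          case True
          show ?thesis unfolding s'_def True
          proof (rule cert_self[OF vs uM bO])
            assume lb: "1 \<le> L0 b"
            have WV: "W u b \<le> V u b" using W_le_V[OF uU] Opt_Rs[OF vs uU] bO lb by auto
            have "\<forall>q'\<in>Opt s u. q' \<noteq> b \<longrightarrow> W u q' \<le> V u b"
            proof (intro ballI impI)
              fix q' assume "q' \<in> Opt s u" "q' \<noteq> b"
              assume q'O: "q' \<in> Opt s u"
              have "W u q' \<le> ov s u q'" using Wle_ov[OF q'O] .
              also have "\<dots> \<le> ov s u b" using bmax q'O by blast
              finally show "W u q' \<le> V u b" using ovbW WV by simp
            qed
            moreover have "W u (pos s u) \<le> V u b" using uT cvT ovb ovbW WV by simp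
            ultimately show "(\<forall>q'\<in>Opt s u. q' \<noteq> b \<longrightarrow> W u q' \<le> V u b) \<and> W u (pos s u) \<le> V u b" by simp
          qed
        next
          case wu: False
          show ?thesis
          proof (cases "cell w = cell u")
            case False then show ?thesis unfolding s'_def using cert_other[OF vs uM bO wM False] ce wM by simp
          next
            case cwu: True
            show ?thesis unfolding s'_def
            proof (rule cert_sib[OF vs uM bO wM wu cwu])
              show "cert s w" using ce wM by simp
              assume l: "1 \<le> L0 (pos s w)"
              have wU: "w \<in> U" using wM M_U by blast
              have "b \<in> Opt s w \<or> b = pos s w" using Opt_share[OF vs uU wU wu cwu bO] .
              then show "W u (pos s u) \<le> V u (pos s w)"
              proof
                assume "b \<in> Opt s w"
                then have "W w b \<le> V w (pos s w)" using ce wM l unfolding cert_def by auto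
                then show ?thesis using ovb ovbW cvT uT W_cell[OF cwu] V_cell[OF cwu] by simp
              next
                assume bw: "b = pos s w"
                have "W u b \<le> V u b" using W_le_V[OF uU] Opt_Rs[OF vs uU] bO l bw by auto
                then show ?thesis using ovb ovbW cvT uT bw by simp
              qed
            qed
          qed
        qed
      qed
      have Inv': "Inv s' b H" unfolding Inv_def using vs' sh' ce' by simp
      have bR: "b \<in> Rs (cell u)" using Opt_Rs[OF vs uU] bO by blast
      have "rkW u b < rkW u (pos s u)" using rkW_less[OF uU bR] ovb ovbW cvT uT by simp
      then have "muW s' < muW s" unfolding muW_def s'_def by (rule mu_dec[OF vs uM bO, of rkW])
      then have "goal s'" using less.hyps[OF _ Inv'] by simp
      then show ?thesis using goal_step stp unfolding s'_def by blast
    qed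
  qed
qed

theorem main_abs:
  assumes "\<forall>b\<in>M - {a}. br s1 b"
  shows "goal s1"
proof (cases "br s1 a")
  case True
  then have "\<forall>u\<in>M. br s1 u" using assms by blast
  then show ?thesis by (rule goal_here)
next
  case False
  have vs: "valid s1" using valid_s1 .
  have aU: "a \<in> U" using a_M M_U by blast
  obtain q where qO: "q \<in> Opt s1 a" and qgt: "ov s1 a q > cv s1 a"
    using False br_iff'[OF vs aU] by (auto simp: not_le)
  obtain b where bO: "b \<in> Opt s1 a" and bmax: "\<forall>x\<in>Opt s1 a. ov s1 a x \<le> ov s1 a b"
    using best_reply[OF vs aU qO] by blast
  have ovb: "ov s1 a b > cv s1 a" using bmax qO qgt by force
  have stp: "step s1 (mv s1 a b)" using mv_step'[OF vs aU bO ovb] .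
  define s' where "s' = mv s1 a b"
  have vs': "valid s'" unfolding s'_def using valid_mv[OF vs a_M bO] .
  have ovW: "ov s1 a x = W a x" for x unfolding ov_def W_def L0_def by simp
  have cvV: "cv s1 a = V a (pos s1 a)" unfolding cv_def V_def L0_def by simp
  have l0: "1 \<le> L0 (pos s1 a)" using load_pos[OF vs aU] unfolding L0_def .
  have r0R: "pos s1 a \<in> Rs (cell a)" using pos_Rs[OF vs aU] .
  have Wr0: "W a (pos s1 a) < W a b"
    using W_le_V[OF aU r0R l0] cvV ovb ovW by simp
  have sh': "shape s' b (pos s1 a)" unfolding s'_def using shape_init[OF vs a_M bO] by simp
  have ce': "\<forall>w\<in>M. cert s' w"
  proof
    fix w assume wM: "w \<in> M"
    show "cert s' w"
    proof (cases "w = a")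
      case True
      show ?thesis unfolding s'_def True
      proof (rule cert_self[OF vs a_M bO])
        assume lb: "1 \<le> L0 b"
        have WV: "W a b \<le> V a b" using W_le_V[OF aU] Opt_Rs[OF vs aU] bO lb by auto
        have "\<forall>q'\<in>Opt s1 a. q' \<noteq> b \<longrightarrow> W a q' \<le> V a b"
          using bmax ovW WV by (metis order.trans)
        moreover have "W a (pos s1 a) \<le> V a b" using Wr0 WV by simp
        ultimately show "(\<forall>q'\<in>Opt s1 a. q' \<noteq> b \<longrightarrow> W a q' \<le> V a b) \<and> W a (pos s1 a) \<le> V a b" by simp
      qed
    next
      case wa: False
      have bw: "br s1 w" using assms wM wa by blast
      have cw: "cert s1 w" using cert_from_br[OF wM bw] .
      show ?thesis
      proof (cases "cell w = cell a")
        case False then show ?thesis unfolding s'_def using cert_other[OF vs a_M bO wM False] cw by simp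
      next
        case cwa: True
        show ?thesis unfolding s'_def
        proof (rule cert_sib[OF vs a_M bO wM wa cwa cw])
          assume l: "1 \<le> L0 (pos s1 w)"
          have wU: "w \<in> U" using wM M_U by blast
          have "b \<in> Opt s1 w \<or> b = pos s1 w" using Opt_share[OF vs aU wU wa cwa bO] .
          then show "W a (pos s1 a) \<le> V a (pos s1 w)"
          proof
            assume "b \<in> Opt s1 w"
            then have "ov s1 w b \<le> cv s1 w" using bw br_iff'[OF vs wU] by simp
            moreover have "ov s1 w b = W a b" unfolding ov_def W_def L0_def using cwa by simp
            moreover have "cv s1 w = V a (pos s1 w)" unfolding cv_def V_def L0_def using cwa by simp
            ultimately show ?thesis using Wr0 by simp
          next
            assume bw': "b = pos s1 w"
            have "W a b \<le> V a b" using W_le_V[OF aU] Opt_Rs[OF vs aU] bO l bw' by auto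
            then show ?thesis using Wr0 bw' by simp
          qed
        qed
      qed
    qed
  qed
  have "Inv s' b (pos s1 a)" unfolding Inv_def using vs' sh' ce' by simp
  then have "goal s'" by (rule phase1)
  then show ?thesis using goal_step stp unfolding s'_def by blast
qed

end



locale sg =
  fixes N :: "'i set" and Om :: "'w set" and Pi :: "'i \<Rightarrow> 'w set set"
    and mu :: "'w \<Rightarrow> real" and K :: "'i \<Rightarrow> nat" and c :: "'i \<Rightarrow> nat \<Rightarrow> real"
    and v :: "'i \<Rightarrow> nat \<Rightarrow> 'w \<Rightarrow> real"
  assumes SG: "search_game N Om Pi mu K c v"
begin

lemma finN: "finite N" and finOm: "finite Om"
  using SG unfolding search_game_def by auto

lemma cell_sub: "i \<in> N \<Longrightarrow> p \<in> Pi i \<Longrightarrow> p \<subseteq> Om"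
  using SG unfolding search_game_def by blast

lemma cell_disj: "i \<in> N \<Longrightarrow> p \<in> Pi i \<Longrightarrow> p' \<in> Pi i \<Longrightarrow> w \<in> p \<Longrightarrow> w \<in> p' \<Longrightarrow> p = p'"
  using SG unfolding search_game_def by blast

lemma mu_nonneg: "w \<in> Om \<Longrightarrow> 0 \<le> mu w"
  using SG unfolding search_game_def by blast

lemma mu_cell_pos: "i \<in> N \<Longrightarrow> p \<in> Pi i \<Longrightarrow> 0 < sum mu p"
  using SG unfolding search_game_def by blast

lemma v_mono1: "i \<in> N \<Longrightarrow> w \<in> Om \<Longrightarrow> 1 \<le> m \<Longrightarrow> v i (Suc m) w \<le> v i m w"
  using SG unfolding search_game_def by blast

lemma c_conv: "i \<in> N \<Longrightarrow> 1 \<le> k \<Longrightarrow> k + 1 \<le> K i \<Longrightarrow> c i (k + 1) - c i k \<ge> c i k - c i (k - 1)"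
  using SG unfolding search_game_def by blast

lemma v_mono: "i \<in> N \<Longrightarrow> w \<in> Om \<Longrightarrow> 1 \<le> n \<Longrightarrow> n \<le> m \<Longrightarrow> v i m w \<le> v i n w"
proof (induction m)
  case 0 then show ?case by simp
next
  case (Suc m)
  show ?case
  proof (cases "n = Suc m")
    case True then show ?thesis by simp
  next
    case False
    then have "n \<le> m" using Suc.prems by simp
    then have "v i m w \<le> v i n w" using Suc by simp
    moreover have "v i (Suc m) w \<le> v i m w" using v_mono1 Suc.prems \<open>n \<le> m\<close> by simp
    ultimately show ?thesis by simp
  qed
qed

lemma d_mono: "i \<in> N \<Longrightarrow> a \<le> b \<Longrightarrow> b + 1 \<le> K i \<Longrightarrow> c i (Suc a) - c i a \<le> c i (Suc b) - c i b"
proof (induction b)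
  case 0 then show ?case by simp
next
  case (Suc b)
  show ?case
  proof (cases "a = Suc b")
    case True then show ?thesis by simp
  next
    case False
    then have "a \<le> b" using Suc.prems by simp
    then have "c i (Suc a) - c i a \<le> c i (Suc b) - c i b" using Suc by simp
    moreover have "c i (Suc b) - c i b \<le> c i (Suc (Suc b)) - c i (Suc b)"
      using c_conv[of i "Suc b"] Suc.prems by simp
    ultimately show ?thesis by simp
  qed
qed

abbreviation CU where "CU \<equiv> cell_units N Pi K"

lemma CU_iff: "(i, p, j) \<in> CU \<longleftrightarrow> i \<in> N \<and> p \<in> Pi i \<and> 1 \<le> j \<and> j \<le> K i"
  unfolding cell_units_def by auto

lemma finite_Pi: "i \<in> N \<Longrightarrow> finite (Pi i)"
proof -
  assume "i \<in> N"
  then have "Pi i \<subseteq> Pow Om" using cell_sub by blast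
  then show "finite (Pi i)" using finOm finite_subset by blast
qed

lemma finite_CU: "finite CU"
proof -
  have "CU \<subseteq> (SIGMA i:N. Pi i \<times> {1..K i})" unfolding cell_units_def by auto
  moreover have "finite (SIGMA i:N. Pi i \<times> {1..K i})"
    using finN finite_Pi by (intro finite_SigmaI) auto
  ultimately show ?thesis using finite_subset by blast
qed

definition posc :: "('i, 'w) cu_profile \<Rightarrow> 'i \<times> 'w set \<times> nat \<Rightarrow> 'w + ('i \<times> 'w set)" where
  "posc s u = (case u of (i, p, j) \<Rightarrow> (case s i p j of Some w \<Rightarrow> Inl w | None \<Rightarrow> Inr (i, p)))"

definition lamload :: "('i, 'w) cu_profile \<Rightarrow> 'i \<Rightarrow> 'w set \<Rightarrow> nat" where
  "lamload s i p = card {j\<in>{1..K i}. s i p j = None}"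

definition loadc :: "('i, 'w) cu_profile \<Rightarrow> 'w + ('i \<times> 'w set) \<Rightarrow> nat" where
  "loadc s r = (case r of Inl w \<Rightarrow> searchers N Pi K s w | Inr (i, p) \<Rightarrow> lamload s i p)"

definition Fc :: "'i \<times> 'w set \<Rightarrow> 'w + ('i \<times> 'w set) \<Rightarrow> nat \<Rightarrow> real" where
  "Fc cp r n = (case cp of (i, p) \<Rightarrow> (case r of Inl w \<Rightarrow> mu w / sum mu p * v i n w
      | Inr _ \<Rightarrow> c i (K i - n + 1) - c i (K i - n)))"

definition Optc :: "('i, 'w) cu_profile \<Rightarrow> 'i \<times> 'w set \<times> nat \<Rightarrow> ('w + ('i \<times> 'w set)) set" where
  "Optc s u = (case u of (i, p, j) \<Rightarrow>
     Inl ` {w\<in>p. \<forall>j'\<in>{1..K i}. s i p j' \<noteq> Some w} \<union> (if s i p j = None then {} else {Inr (i, p)}))"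

definition ofres :: "'w + ('i \<times> 'w set) \<Rightarrow> 'w option" where
  "ofres r = (case r of Inl w \<Rightarrow> Some w | Inr _ \<Rightarrow> None)"

definition mvc :: "('i, 'w) cu_profile \<Rightarrow> 'i \<times> 'w set \<times> nat \<Rightarrow> 'w + ('i \<times> 'w set) \<Rightarrow> ('i, 'w) cu_profile" where
  "mvc s u r = (case u of (i, p, j) \<Rightarrow> upd_cu s i p j (ofres r))"

definition Rsc :: "'i \<times> 'w set \<Rightarrow> ('w + ('i \<times> 'w set)) set" where
  "Rsc cp = (case cp of (i, p) \<Rightarrow> Inl ` p \<union> {Inr (i, p)})"

definition cellc :: "'i \<times> 'w set \<times> nat \<Rightarrow> 'i \<times> 'w set" where
  "cellc u = (case u of (i, p, j) \<Rightarrow> (i, p))"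

lemma upd_cu_apply: "upd_cu s i p j x i' p' j' = (if i' = i \<and> p' = p \<and> j' = j then x else s i' p' j')"
  unfolding upd_cu_def by auto


definition Oth :: "('i, 'w) cu_profile \<Rightarrow> 'i \<Rightarrow> 'w set \<Rightarrow> nat \<Rightarrow> 'w set" where
  "Oth s i p j = {w. \<exists>j'\<in>{1..K i}. j' \<noteq> j \<and> s i p j' = Some w}"

definition SR :: "('i, 'w) cu_profile \<Rightarrow> 'w \<Rightarrow> 'i set" where
  "SR s w = {i'\<in>N. \<exists>p'\<in>Pi i'. w \<in> p' \<and> w \<in> induced K s i' p'}"

lemma searchers_SR: "searchers N Pi K s w = card (SR s w)"
  unfolding searchers_def SR_def by simp

lemma finite_SR: "finite (SR s w)" unfolding SR_def using finN by simp

lemma induced_split: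
  assumes "j \<in> {1..K i}"
  shows "induced K s i p = Oth s i p j \<union> set_option (s i p j)"
proof (rule set_eqI)
  fix w show "w \<in> induced K s i p \<longleftrightarrow> w \<in> Oth s i p j \<union> set_option (s i p j)"
  proof
    assume "w \<in> induced K s i p"
    then obtain ja where ja: "ja \<in> {1..K i}" "s i p ja = Some w" unfolding induced_def by auto
    show "w \<in> Oth s i p j \<union> set_option (s i p j)"
    proof (cases "ja = j")
      case True then show ?thesis using ja by simp
    next
      case False then show ?thesis using ja unfolding Oth_def by auto
    qed
  next
    assume "w \<in> Oth s i p j \<union> set_option (s i p j)"
    then show "w \<in> induced K s i p" using assms unfolding Oth_def induced_def by (cases "s i p j") auto
  qed
qed

lemma induced_upd: "j \<in> {1..K i} \<Longrightarrow> induced K (upd_cu s i p j x) i p = Oth s i p j \<union> set_option x"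
  unfolding induced_def Oth_def upd_cu_apply by (cases x) auto

lemma induced_upd_other: "(i', p') \<noteq> (i, p) \<Longrightarrow> induced K (upd_cu s i p j x) i' p' = induced K s i' p'"
  unfolding induced_def upd_cu_apply by auto

lemma Oth_upd: "Oth (upd_cu s i p j x) i p j = Oth s i p j"
  unfolding Oth_def upd_cu_apply by auto

lemma prof_in_cell: "cu_profile N Pi K s \<Longrightarrow> (i, p, j) \<in> CU \<Longrightarrow> s i p j = Some w \<Longrightarrow> w \<in> p"
  unfolding cu_profile_def by blast

lemma prof_distinct: "cu_profile N Pi K s \<Longrightarrow> (i, p, j) \<in> CU \<Longrightarrow> (i, p, j') \<in> CU \<Longrightarrow> j \<noteq> j'
   \<Longrightarrow> s i p j \<noteq> None \<Longrightarrow> s i p j \<noteq> s i p j'"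
  unfolding cu_profile_def by blast

lemma prof_outside: "cu_profile N Pi K s \<Longrightarrow> (i, p, j) \<notin> CU \<Longrightarrow> s i p j = None"
  unfolding cu_profile_def by blast

lemma Oth_sub:
  assumes "cu_profile N Pi K s" "i \<in> N" "p \<in> Pi i"
  shows "Oth s i p j \<subseteq> p"
proof
  fix w assume "w \<in> Oth s i p j"
  then obtain j' where j': "j' \<in> {1..K i}" "s i p j' = Some w" unfolding Oth_def by auto
  then have "(i, p, j') \<in> CU" using assms unfolding CU_iff by auto
  then show "w \<in> p" using prof_in_cell[OF assms(1) _ j'(2)] by simp
qed

lemma cur_notin_Oth:
  assumes "cu_profile N Pi K s" "(i, p, j) \<in> CU" "s i p j = Some y"
  shows "y \<notin> Oth s i p j"
proof
  assume "y \<in> Oth s i p j"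
  then obtain j' where j': "j' \<in> {1..K i}" "j' \<noteq> j" "s i p j' = Some y" unfolding Oth_def by auto
  then have "(i, p, j') \<in> CU" using assms(2) unfolding CU_iff by auto
  then show False using prof_distinct[OF assms(1,2) _ _] j' assms(3) by fastforce
qed

lemma i_in_SR: "i \<in> N \<Longrightarrow> p \<in> Pi i \<Longrightarrow> w \<in> p \<Longrightarrow> (i \<in> SR s w \<longleftrightarrow> w \<in> induced K s i p)"
  unfolding SR_def using cell_disj by blast

lemma SR_upd_in:
  assumes "i \<in> N" "p \<in> Pi i" "w \<in> p"
  shows "SR (upd_cu s i p j x) w = (if w \<in> induced K (upd_cu s i p j x) i p then insert i (SR s w) else SR s w - {i})"
proof -
  have o: "i' \<in> SR (upd_cu s i p j x) w \<longleftrightarrow> i' \<in> SR s w" if "i' \<noteq> i" for i'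
    unfolding SR_def using induced_upd_other[of i' _ i p s j x] that by auto
  have m: "i \<in> SR (upd_cu s i p j x) w \<longleftrightarrow> w \<in> induced K (upd_cu s i p j x) i p"
    using i_in_SR[OF assms] .
  have "y \<in> SR (upd_cu s i p j x) w \<longleftrightarrow> y \<in> (if w \<in> induced K (upd_cu s i p j x) i p then insert i (SR s w) else SR s w - {i})" for y
    using o[of y] m by (cases "y = i") auto
  then show ?thesis by blast
qed

lemma SR_upd_out:
  assumes "i \<in> N" "p \<in> Pi i" "w \<notin> p"
  shows "SR (upd_cu s i p j x) w = SR s w"
proof -
  have "i' \<in> SR (upd_cu s i p j x) w \<longleftrightarrow> i' \<in> SR s w" for i'
  proof (cases "i' = i")
    case False then show ?thesis unfolding SR_def using induced_upd_other[of i' _ i p s j x] by auto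
  next
    case True
    have "(\<exists>p'\<in>Pi i. w \<in> p' \<and> w \<in> induced K (upd_cu s i p j x) i p') \<longleftrightarrow> (\<exists>p'\<in>Pi i. w \<in> p' \<and> w \<in> induced K s i p')"
      using induced_upd_other[of i _ i p s j x] assms(3) by auto
    then show ?thesis unfolding SR_def True by simp
  qed
  then show ?thesis by blast
qed

lemma card_induced:
  assumes prof: "cu_profile N Pi K s" and iN: "i \<in> N" and pP: "p \<in> Pi i"
  shows "card (induced K s i p) + lamload s i p = K i"
proof -
  define A where "A = {j\<in>{1..K i}. s i p j \<noteq> None}"
  define Z where "Z = {j\<in>{1..K i}. s i p j = None}"
  have AZ: "A \<union> Z = {1..K i}" "A \<inter> Z = {}" unfolding A_def Z_def by auto
  have fA: "finite A" "finite Z" unfolding A_def Z_def by auto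
  have cAZ: "card A + card Z = K i" using card_Un_disjoint[OF fA AZ(2)] AZ(1) by simp
  have ind: "induced K s i p = (\<lambda>j. the (s i p j)) ` A"
  proof (rule set_eqI)
    fix w show "w \<in> induced K s i p \<longleftrightarrow> w \<in> (\<lambda>j. the (s i p j)) ` A"
    proof
      assume "w \<in> induced K s i p"
      then obtain j where "j \<in> {1..K i}" "s i p j = Some w" unfolding induced_def by auto
      then show "w \<in> (\<lambda>j. the (s i p j)) ` A" unfolding A_def by (intro image_eqI[of _ _ j]) auto
    next
      assume "w \<in> (\<lambda>j. the (s i p j)) ` A"
      then obtain j where "j \<in> A" "w = the (s i p j)" by auto
      then show "w \<in> induced K s i p" unfolding A_def induced_def by auto
    qed
  qed
  have inj: "inj_on (\<lambda>j. the (s i p j)) A"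
  proof (rule inj_onI)
    fix j1 j2 assume j: "j1 \<in> A" "j2 \<in> A" "the (s i p j1) = the (s i p j2)"
    then have "s i p j1 = s i p j2" unfolding A_def by auto
    moreover have "(i, p, j1) \<in> CU" "(i, p, j2) \<in> CU" "s i p j1 \<noteq> None"
      using j iN pP unfolding A_def CU_iff by auto
    ultimately show "j1 = j2" using prof_distinct[OF prof] by blast
  qed
  have "card (induced K s i p) = card A" unfolding ind using card_image[OF inj] .
  then show ?thesis using cAZ unfolding lamload_def Z_def by simp
qed


lemma Optc_Inl: "Inl z \<in> Optc s (i, p, j) \<longleftrightarrow> z \<in> p \<and> (\<forall>j'\<in>{1..K i}. s i p j' \<noteq> Some z)"
  unfolding Optc_def by (auto split: if_splits)

lemma Optc_Inr: "Inr cp \<in> Optc s (i, p, j) \<longleftrightarrow> cp = (i, p) \<and> s i p j \<noteq> None"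
  unfolding Optc_def by (auto split: if_splits)

lemma payoff_mv:
  assumes prof: "cu_profile N Pi K s" and u: "(i, p, j) \<in> CU" and rO: "r \<in> Optc s (i, p, j)"
  shows "cell_payoff N Pi mu K c v (mvc s (i, p, j) r) i p = cell_payoff N Pi mu K c v s i p
      + Fc (i, p) r (Suc (loadc s r)) - Fc (i, p) (posc s (i, p, j)) (loadc s (posc s (i, p, j)))"
proof -
  have iN: "i \<in> N" and pP: "p \<in> Pi i" and jK: "j \<in> {1..K i}" using u unfolding CU_iff by auto
  define x where "x = ofres r"
  define s' where "s' = upd_cu s i p j x"
  have mv: "mvc s (i, p, j) r = s'" unfolding mvc_def s'_def x_def by simp
  define Ot where "Ot = Oth s i p j"
  have Op: "Ot \<subseteq> p" unfolding Ot_def using Oth_sub[OF prof iN pP] .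
  have fp: "finite p" using finite_subset[OF cell_sub[OF iN pP] finOm] .
  have fO: "finite Ot" using finite_subset[OF Op fp] .
  have S: "induced K s i p = Ot \<union> set_option (s i p j)" unfolding Ot_def using induced_split[OF jK] .
  have S': "induced K s' i p = Ot \<union> set_option x" unfolding Ot_def s'_def using induced_upd[OF jK] .
  define g where "g t w = mu w / sum mu p * v i (searchers N Pi K t w) w" for t w
  have pay: "cell_payoff N Pi mu K c v t i p = (\<Sum>w\<in>induced K t i p. g t w) - c i (card (induced K t i p))" for t
    unfolding cell_payoff_def g_def by simp
  have gO: "g s' w = g s w" if "w \<in> Ot" for w
  proof -
    have wp: "w \<in> p" using that Op by blast
    have "w \<in> induced K s' i p" using S' that by blast
    then have "SR s' w = insert i (SR s w)" unfolding s'_def using SR_upd_in[OF iN pP wp] by simp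
    moreover have "i \<in> SR s w" using i_in_SR[OF iN pP wp] S that by blast
    ultimately have "SR s' w = SR s w" by (simp add: insert_absorb)
    then show ?thesis unfolding g_def searchers_SR by simp
  qed
  have sumO: "(\<Sum>w\<in>Ot. g s' w) = (\<Sum>w\<in>Ot. g s w)" using gO by (rule sum.cong[OF refl])
  have cardS: "card (induced K s i p) + lamload s i p = K i" using card_induced[OF prof iN pP] .
  have new: "searchers N Pi K s' z = Suc (searchers N Pi K s z)" if "z \<in> p" "z \<notin> induced K s i p" "x = Some z" for z
  proof -
    have "z \<in> induced K s' i p" using S' that(3) by simp
    then have "SR s' z = insert i (SR s z)" unfolding s'_def using SR_upd_in[OF iN pP that(1)] by simp
    moreover have "i \<notin> SR s z" using i_in_SR[OF iN pP that(1)] that(2) by blast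
    ultimately show ?thesis unfolding searchers_SR using finite_SR by simp
  qed
  show ?thesis
  proof (cases r)
    case (Inl z)
    have xz: "x = Some z" unfolding x_def ofres_def Inl by simp
    have zp: "z \<in> p" and zfree: "\<forall>j'\<in>{1..K i}. s i p j' \<noteq> Some z" using rO unfolding Inl Optc_Inl by auto
    have zS: "z \<notin> induced K s i p" using zfree unfolding induced_def by blast
    have zO: "z \<notin> Ot" using zS S by blast
    have S'z: "induced K s' i p = insert z Ot" using S' xz by simp
    have sum': "(\<Sum>w\<in>induced K s' i p. g s' w) = g s' z + (\<Sum>w\<in>Ot. g s w)"
      unfolding S'z using sum.insert[OF fO zO, of "g s'"] sumO by simp
    have card': "card (induced K s' i p) = Suc (card Ot)" unfolding S'z using fO zO by simp
    have gz: "g s' z = Fc (i, p) r (Suc (loadc s r))"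
      unfolding g_def Fc_def loadc_def Inl using new[OF zp zS xz] by simp
    show ?thesis
    proof (cases "s i p j")
      case None
      have SO: "induced K s i p = Ot" using S None by simp
      have pos: "posc s (i, p, j) = Inr (i, p)" unfolding posc_def using None by simp
      have l: "loadc s (Inr (i, p)) = lamload s i p" unfolding loadc_def by simp
      have Kl: "K i - lamload s i p = card Ot" using cardS SO by simp
      have "Fc (i, p) (posc s (i, p, j)) (loadc s (posc s (i, p, j))) = c i (Suc (card Ot)) - c i (card Ot)"
        unfolding pos l Fc_def using Kl by simp
      then show ?thesis unfolding mv pay sum' card' using SO gz by simp
    next
      case (Some y)
      have yO: "y \<notin> Ot" unfolding Ot_def using cur_notin_Oth[OF prof u Some] .
      have SO: "induced K s i p = insert y Ot" using S Some by simp
      have pos: "posc s (i, p, j) = Inl y" unfolding posc_def using Some by simp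
      have sumS: "(\<Sum>w\<in>induced K s i p. g s w) = g s y + (\<Sum>w\<in>Ot. g s w)"
        unfolding SO using sum.insert[OF fO yO, of "g s"] by simp
      have cardS': "card (induced K s i p) = Suc (card Ot)" unfolding SO using fO yO by simp
      have gy: "Fc (i, p) (posc s (i, p, j)) (loadc s (posc s (i, p, j))) = g s y"
        unfolding pos Fc_def loadc_def g_def by simp
      show ?thesis unfolding mv pay sum' card' sumS cardS' gy gz by simp
    qed
  next
    case (Inr cp)
    have cp: "cp = (i, p)" and nn: "s i p j \<noteq> None" using rO unfolding Inr Optc_Inr by auto
    then obtain y where Some: "s i p j = Some y" by auto
    have xN: "x = None" unfolding x_def ofres_def Inr by simp
    have yO: "y \<notin> Ot" unfolding Ot_def using cur_notin_Oth[OF prof u Some] .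
    have SO: "induced K s i p = insert y Ot" using S Some by simp
    have S'Ot: "induced K s' i p = Ot" using S' xN by simp
    have pos: "posc s (i, p, j) = Inl y" unfolding posc_def using Some by simp
    have sumS: "(\<Sum>w\<in>induced K s i p. g s w) = g s y + (\<Sum>w\<in>Ot. g s w)"
      unfolding SO using sum.insert[OF fO yO, of "g s"] by simp
    have cardS': "card (induced K s i p) = Suc (card Ot)" unfolding SO using fO yO by simp
    have gy: "Fc (i, p) (posc s (i, p, j)) (loadc s (posc s (i, p, j))) = g s y"
      unfolding pos Fc_def loadc_def g_def by simp
    have l: "loadc s r = lamload s i p" unfolding loadc_def Inr cp by simp
    have Kl1: "K i - Suc (lamload s i p) = card Ot" and Kl2: "K i - Suc (lamload s i p) + 1 = Suc (card Ot)"
      using cardS cardS' by auto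
    have Fr: "Fc (i, p) r (Suc (loadc s r)) = c i (Suc (card Ot)) - c i (card Ot)"
      unfolding l unfolding Fc_def Inr using Kl1 Kl2 by simp
    show ?thesis unfolding mv pay S'Ot sumS cardS' gy Fr using sumO by simp
  qed
qed


lemma posc_mv:
  assumes prof: "cu_profile N Pi K s" and u: "(i, p, j) \<in> CU" and rO: "r \<in> Optc s (i, p, j)"
  shows "posc (mvc s (i, p, j) r) u' = (if u' = (i, p, j) then r else posc s u')"
proof (cases "u' = (i, p, j)")
  case True
  show ?thesis
  proof (cases r)
    case (Inl z) then show ?thesis using True unfolding posc_def mvc_def ofres_def upd_cu_apply by simp
  next
    case (Inr cp)
    then have "cp = (i, p)" using rO Optc_Inr by blast
    then show ?thesis using True Inr unfolding posc_def mvc_def ofres_def upd_cu_apply by simp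
  qed
next
  case False
  obtain i' p' j' where u': "u' = (i', p', j')" by (cases u') auto
  show ?thesis using False unfolding u' posc_def mvc_def upd_cu_apply by auto
qed

lemma lamload_upd_other: "(i', p') \<noteq> (i, p) \<Longrightarrow> lamload (upd_cu s i p j x) i' p' = lamload s i' p'"
proof -
  assume a: "(i', p') \<noteq> (i, p)"
  have "upd_cu s i p j x i' p' = s i' p'" using a unfolding upd_cu_def by auto
  then show ?thesis unfolding lamload_def by simp
qed

lemma load_mv:
  assumes prof: "cu_profile N Pi K s" and u: "(i, p, j) \<in> CU" and rO: "r \<in> Optc s (i, p, j)"
  shows "loadc (mvc s (i, p, j) r) r' = (if r' = r then Suc (loadc s r')
           else if r' = posc s (i, p, j) then loadc s r' - 1 else loadc s r')"
proof -
  have iN: "i \<in> N" and pP: "p \<in> Pi i" and jK: "j \<in> {1..K i}" using u unfolding CU_iff by auto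
  define x where "x = ofres r"
  define s' where "s' = upd_cu s i p j x"
  have mv: "mvc s (i, p, j) r = s'" unfolding mvc_def s'_def x_def by simp
  define Ot where "Ot = Oth s i p j"
  have S: "induced K s i p = Ot \<union> set_option (s i p j)" unfolding Ot_def using induced_split[OF jK] .
  have S': "induced K s' i p = Ot \<union> set_option x" unfolding Ot_def s'_def using induced_upd[OF jK] .
  have rx: "r = Inl z \<longleftrightarrow> x = Some z" for z unfolding x_def ofres_def by (cases r) auto
  have rN: "r = Inr (i, p) \<longleftrightarrow> x = None"
    using rO Optc_Inr unfolding x_def ofres_def by (cases r) auto
  have posS: "posc s (i, p, j) = Inl y \<longleftrightarrow> s i p j = Some y" for y
    unfolding posc_def by (cases "s i p j") auto
  have posN: "posc s (i, p, j) = Inr (i, p) \<longleftrightarrow> s i p j = None"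
    unfolding posc_def by (cases "s i p j") auto
  have posInr: "posc s (i, p, j) = Inr cp \<Longrightarrow> cp = (i, p)" for cp
    unfolding posc_def by (cases "s i p j") auto
  have rInr: "r = Inr cp \<Longrightarrow> cp = (i, p)" for cp using rO Optc_Inr by blast
  show ?thesis unfolding mv
  proof (cases r')
    case (Inl w)
    have ld: "loadc t r' = card (SR t w)" for t unfolding loadc_def Inl searchers_SR by simp
    show "loadc s' r' = (if r' = r then Suc (loadc s r') else if r' = posc s (i, p, j) then loadc s r' - 1 else loadc s r')"
    proof (cases "w \<in> p")
      case False
      have "SR s' w = SR s w" unfolding s'_def using SR_upd_out[OF iN pP False] .
      moreover have "r' \<noteq> r" using False rO unfolding Inl by (auto simp: Optc_Inl)
      moreover have "r' \<noteq> posc s (i, p, j)"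
      proof
        assume "r' = posc s (i, p, j)"
        then have "s i p j = Some w" using Inl by (metis posS)
        then show False using False prof_in_cell[OF prof u] by blast
      qed
      ultimately show ?thesis unfolding ld by simp
    next
      case wp: True
      have SRe: "SR s' w = (if w \<in> induced K s' i p then insert i (SR s w) else SR s w - {i})"
        unfolding s'_def using SR_upd_in[OF iN pP wp] .
      have iS: "i \<in> SR s w \<longleftrightarrow> w \<in> induced K s i p" using i_in_SR[OF iN pP wp] .
      show ?thesis
      proof (cases "r' = r")
        case True
        then have xw: "x = Some w" using Inl by (metis rx)
        have "\<forall>j'\<in>{1..K i}. s i p j' \<noteq> Some w" using rO True Inl by (auto simp: Optc_Inl)
        then have "w \<notin> induced K s i p" unfolding induced_def by blast
        then have "SR s' w = insert i (SR s w)" "i \<notin> SR s w" using SRe S' xw iS by auto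
        then show ?thesis unfolding ld using True finite_SR by simp
      next
        case rr: False
        then have xw: "x \<noteq> Some w" using Inl by (metis rx)
        show ?thesis
        proof (cases "r' = posc s (i, p, j)")
          case True
          then have sw: "s i p j = Some w" using Inl by (metis posS)
          have "w \<notin> Ot" unfolding Ot_def using cur_notin_Oth[OF prof u sw] .
          then have "w \<notin> induced K s' i p" using S' xw by auto
          moreover have "i \<in> SR s w" using iS S sw by simp
          ultimately have "SR s' w = SR s w - {i}" "i \<in> SR s w" using SRe by auto
          then show ?thesis unfolding ld using rr True finite_SR by simp
        next
          case False
          then have sw: "s i p j \<noteq> Some w" using Inl by (metis posS)
          have eq: "w \<in> induced K s' i p \<longleftrightarrow> w \<in> induced K s i p" using S S' sw xw by auto
          have "SR s' w = SR s w" using SRe iS eq by (auto simp: insert_absorb)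
          then show ?thesis unfolding ld using rr False by simp
        qed
      qed
    qed
  next
    case (Inr cp)
    obtain i' p' where cp: "cp = (i', p')" by (cases cp) auto
    have ld: "loadc t r' = lamload t i' p'" for t unfolding loadc_def Inr cp by simp
    show "loadc s' r' = (if r' = r then Suc (loadc s r') else if r' = posc s (i, p, j) then loadc s r' - 1 else loadc s r')"
    proof (cases "(i', p') = (i, p)")
      case False
      have "lamload s' i' p' = lamload s i' p'" unfolding s'_def using lamload_upd_other[OF False] .
      moreover have "r' \<noteq> r" using False rInr unfolding Inr cp by blast
      moreover have "r' \<noteq> posc s (i, p, j)" using False posInr unfolding Inr cp by metis
      ultimately show ?thesis unfolding ld by simp
    next
      case True
      have ii: "i' = i" "p' = p" using True by auto
      define Z where "Z = {j'\<in>{1..K i}. s i p j' = None}"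
      have Z': "{j'\<in>{1..K i}. s' i p j' = None} = (Z - {j}) \<union> (if x = None then {j} else {})"
        unfolding Z_def s'_def upd_cu_apply using jK by auto
      have fZ: "finite Z" unfolding Z_def by simp
      have lZ: "lamload t i p = card {j'\<in>{1..K i}. t i p j' = None}" for t unfolding lamload_def by simp
      show ?thesis
      proof (cases "r' = r")
        case rr: True
        then have xN: "x = None" using Inr cp ii by (metis rN)
        have nn: "s i p j \<noteq> None" using rO rr Inr cp ii by (auto simp: Optc_Inr)
        have jZ: "j \<notin> Z" using nn unfolding Z_def by simp
        have e: "{j'\<in>{1..K i}. s' i p j' = None} = insert j Z" using Z' xN jZ by auto
        have "lamload s' i p = Suc (lamload s i p)" unfolding lZ e using fZ jZ Z_def by simp
        then show ?thesis unfolding ld ii using rr by simp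
      next
        case rr: False
        then have xN: "x \<noteq> None" using Inr cp ii by (metis rN)
        show ?thesis
        proof (cases "r' = posc s (i, p, j)")
          case True
          then have sN: "s i p j = None" using Inr cp ii by (metis posN)
          then have jZ: "j \<in> Z" unfolding Z_def using jK by simp
          have e: "{j'\<in>{1..K i}. s' i p j' = None} = Z - {j}" using Z' xN by auto
          have "card (Z - {j}) = card Z - 1" using jZ fZ by simp
          then have "lamload s' i p = lamload s i p - 1" unfolding lZ e Z_def by simp
          then show ?thesis unfolding ld ii using rr True by simp
        next
          case False
          then have sN: "s i p j \<noteq> None" using Inr cp ii by (metis posN)
          then have jZ: "j \<notin> Z" unfolding Z_def by simp
          have e: "{j'\<in>{1..K i}. s' i p j' = None} = Z" using Z' xN jZ by auto
          have "lamload s' i p = lamload s i p" unfolding lZ e Z_def by simp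
          then show ?thesis unfolding ld ii using rr False by simp
        qed
      qed
    qed
  qed
qed


lemma adm_of_Opt: "r \<in> Optc s (i, p, j) \<Longrightarrow> admissible K s i p j (ofres r)"
proof (cases r)
  case (Inl z)
  assume "r \<in> Optc s (i, p, j)"
  then have "z \<in> p" "\<forall>j'\<in>{1..K i}. s i p j' \<noteq> Some z" using Inl by (auto simp: Optc_Inl)
  then show ?thesis unfolding admissible_def ofres_def Inl by auto
next
  case (Inr cp) then show ?thesis unfolding admissible_def ofres_def by simp
qed

lemma mvc_eq: "mvc s (i, p, j) r = upd_cu s i p j (ofres r)" unfolding mvc_def by simp

lemma upd_same: "upd_cu s i p j (s i p j) = s"
  unfolding upd_cu_def by (intro ext) auto

lemma inst_pos_Rs: "cu_profile N Pi K s \<Longrightarrow> u \<in> CU \<Longrightarrow> posc s u \<in> Rsc (cellc u)"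
proof -
  assume a: "cu_profile N Pi K s" "u \<in> CU"
  obtain i p j where u: "u = (i, p, j)" by (cases u) auto
  show ?thesis
  proof (cases "s i p j")
    case None then show ?thesis unfolding u posc_def Rsc_def cellc_def by simp
  next
    case (Some w)
    then have "w \<in> p" using prof_in_cell a u by blast
    then show ?thesis unfolding u posc_def Rsc_def cellc_def using Some by simp
  qed
qed

lemma inst_Opt_Rs: "u \<in> CU \<Longrightarrow> Optc s u \<subseteq> Rsc (cellc u)"
  unfolding Optc_def Rsc_def cellc_def by (cases u) auto

lemma inst_pos_notin: "u \<in> CU \<Longrightarrow> posc s u \<notin> Optc s u"
proof -
  assume a: "u \<in> CU"
  obtain i p j where u: "u = (i, p, j)" by (cases u) auto
  have jK: "j \<in> {1..K i}" using a u CU_iff by auto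
  show ?thesis
  proof (cases "s i p j")
    case None then show ?thesis unfolding u posc_def using Optc_Inr by simp
  next
    case (Some w) then show ?thesis unfolding u posc_def using Optc_Inl jK by auto
  qed
qed

lemma inst_load_pos: "cu_profile N Pi K s \<Longrightarrow> u \<in> CU \<Longrightarrow> 1 \<le> loadc s (posc s u)"
proof -
  assume a: "cu_profile N Pi K s" "u \<in> CU"
  obtain i p j where u: "u = (i, p, j)" by (cases u) auto
  have iN: "i \<in> N" and pP: "p \<in> Pi i" and jK: "j \<in> {1..K i}" using a u CU_iff by auto
  show ?thesis
  proof (cases "s i p j")
    case None
    define X where "X = {j\<in>{1..K i}. s i p j = None}"
    have jX: "j \<in> X" unfolding X_def using jK None by simp
    have fX: "finite X" unfolding X_def by simp
    have pos: "0 < card X" using card_gt_0_iff[of X] fX jX by blast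
    have eq: "loadc s (posc s u) = card X" unfolding u posc_def loadc_def lamload_def X_def using None by simp
    show ?thesis using eq pos by linarith
  next
    case (Some w)
    have wp: "w \<in> p" using prof_in_cell a u Some by blast
    have "w \<in> induced K s i p" unfolding induced_def using jK Some by blast
    then have "i \<in> SR s w" using i_in_SR[OF iN pP wp] by simp
    then have pos: "0 < card (SR s w)" using finite_SR[of s w] card_gt_0_iff by blast
    have eq: "loadc s (posc s u) = card (SR s w)" unfolding u posc_def loadc_def searchers_SR using Some by simp
    show ?thesis using eq pos by linarith
  qed
qed

lemma inst_F_mono:
  assumes "u \<in> CU" "r \<in> Rsc (cellc u)" "1 \<le> n" "n \<le> m"
  shows "Fc (cellc u) r m \<le> Fc (cellc u) r n"
proof -
  obtain i p j where u: "u = (i, p, j)" by (cases u) auto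
  have iN: "i \<in> N" and pP: "p \<in> Pi i" and jK: "j \<in> {1..K i}" using assms(1) u CU_iff by auto
  show ?thesis
  proof (cases r)
    case (Inl w)
    have wp: "w \<in> p" using assms(2) unfolding u Rsc_def cellc_def Inl by auto
    have wO: "w \<in> Om" using wp cell_sub[OF iN pP] by blast
    have co: "0 \<le> mu w / sum mu p" using mu_nonneg[OF wO] mu_cell_pos[OF iN pP] by simp
    have "v i m w \<le> v i n w" using v_mono[OF iN wO assms(3,4)] .
    have "mu w * v i m w \<le> mu w * v i n w" using mult_left_mono[OF \<open>v i m w \<le> v i n w\<close> mu_nonneg[OF wO]] .
    then have "mu w * v i m w / sum mu p \<le> mu w * v i n w / sum mu p"
      using mu_cell_pos[OF iN pP] by (intro divide_right_mono) auto
    then show ?thesis unfolding u cellc_def Fc_def Inl by simp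
  next
    case (Inr cp)
    have "c i (Suc (K i - m)) - c i (K i - m) \<le> c i (Suc (K i - n)) - c i (K i - n)"
      using d_mono[OF iN, of "K i - m" "K i - n"] assms(3,4) jK by auto
    then show ?thesis unfolding u cellc_def Fc_def Inr by simp
  qed
qed

lemma inst_br_iff:
  assumes prof: "cu_profile N Pi K s" and uC: "u \<in> CU"
  shows "best_responding N Pi mu K c v s u \<longleftrightarrow>
    (\<forall>r\<in>Optc s u. Fc (cellc u) r (Suc (loadc s r)) \<le> Fc (cellc u) (posc s u) (loadc s (posc s u)))"
proof -
  obtain i p j where u: "u = (i, p, j)" by (cases u) auto
  have uC': "(i, p, j) \<in> CU" using uC u by simp
  have cu: "cellc u = (i, p)" unfolding u cellc_def by simp
  let ?P = "cell_payoff N Pi mu K c v"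
  show ?thesis
  proof
    assume br: "best_responding N Pi mu K c v s u"
    show "\<forall>r\<in>Optc s u. Fc (cellc u) r (Suc (loadc s r)) \<le> Fc (cellc u) (posc s u) (loadc s (posc s u))"
    proof
      fix r assume rO: "r \<in> Optc s u"
      have "admissible K s i p j (ofres r)" using adm_of_Opt rO u by simp
      then have "\<not> ?P (upd_cu s i p j (ofres r)) i p > ?P s i p" using br unfolding best_responding_def u by simp
      moreover have "?P (upd_cu s i p j (ofres r)) i p = ?P s i p + Fc (i, p) r (Suc (loadc s r)) - Fc (i, p) (posc s (i, p, j)) (loadc s (posc s (i, p, j)))"
        using payoff_mv[OF prof uC'] rO u mvc_eq by simp
      ultimately show "Fc (cellc u) r (Suc (loadc s r)) \<le> Fc (cellc u) (posc s u) (loadc s (posc s u))"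
        unfolding cu u by (simp add: cellc_def)
    qed
  next
    assume H: "\<forall>r\<in>Optc s u. Fc (cellc u) r (Suc (loadc s r)) \<le> Fc (cellc u) (posc s u) (loadc s (posc s u))"
    show "best_responding N Pi mu K c v s u"
      unfolding best_responding_def u
    proof (simp only: prod.case, intro allI impI)
      fix x assume adm: "admissible K s i p j x"
      show "\<not> ?P (upd_cu s i p j x) i p > ?P s i p"
      proof (cases "x = s i p j")
        case True then show ?thesis using upd_same[of s i p j] by simp
      next
        case False
        define r where "r = (case x of Some w \<Rightarrow> Inl w | None \<Rightarrow> Inr (i, p))"
        have xr: "ofres r = x" unfolding r_def ofres_def by (cases x) auto
        have rO: "r \<in> Optc s (i, p, j)"
        proof (cases x)
          case None then show ?thesis unfolding r_def using False Optc_Inr by (cases "s i p j") auto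
        next
          case (Some w)
          then have "w \<in> p" "\<forall>j'\<in>{1..K i}. j' \<noteq> j \<longrightarrow> s i p j' \<noteq> Some w" using adm unfolding admissible_def by auto
          moreover have "s i p j \<noteq> Some w" using False Some by simp
          ultimately show ?thesis unfolding r_def Some using Optc_Inl by auto
        qed
        have "?P (upd_cu s i p j x) i p = ?P s i p + Fc (i, p) r (Suc (loadc s r)) - Fc (i, p) (posc s (i, p, j)) (loadc s (posc s (i, p, j)))"
          using payoff_mv[OF prof uC' rO] xr mvc_eq by simp
        moreover have "Fc (i, p) r (Suc (loadc s r)) \<le> Fc (i, p) (posc s (i, p, j)) (loadc s (posc s (i, p, j)))"
          using H rO u cu by simp
        ultimately show ?thesis by simp
      qed
    qed
  qed
qed

lemma inst_mv_valid:
  assumes prof: "cu_profile N Pi K s" and uC: "u \<in> CU" and rO: "r \<in> Optc s u"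
  shows "cu_profile N Pi K (mvc s u r)"
proof -
  obtain i p j where u: "u = (i, p, j)" by (cases u) auto
  have uC': "(i, p, j) \<in> CU" using uC u by simp
  have rO': "r \<in> Optc s (i, p, j)" using rO u by simp
  define s' where "s' = upd_cu s i p j (ofres r)"
  have mv: "mvc s u r = s'" unfolding u s'_def mvc_def by simp
  have new_in: "ofres r = Some w \<Longrightarrow> w \<in> p \<and> (\<forall>j'\<in>{1..K i}. s i p j' \<noteq> Some w)" for w
    using rO' unfolding ofres_def by (cases r) (auto simp: Optc_Inl)
  have c1: "\<forall>i' p' j'. (i', p', j') \<notin> CU \<longrightarrow> s' i' p' j' = None"
    using prof_outside[OF prof] uC' unfolding s'_def upd_cu_apply by auto
  have c2: "\<forall>i' p' j' w. (i', p', j') \<in> CU \<and> s' i' p' j' = Some w \<longrightarrow> w \<in> p'"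
  proof (intro allI impI)
    fix i' p' j' w assume a: "(i', p', j') \<in> CU \<and> s' i' p' j' = Some w"
    show "w \<in> p'"
    proof (cases "i' = i \<and> p' = p \<and> j' = j")
      case True
      then have "ofres r = Some w" using a unfolding s'_def upd_cu_apply by simp
      then show ?thesis using new_in True by blast
    next
      case False
      then have "s i' p' j' = Some w" using a unfolding s'_def upd_cu_apply if_not_P[OF False] by simp
      then show ?thesis using prof_in_cell[OF prof] a by blast
    qed
  qed
  have c3: "s' i' p' j1 \<noteq> s' i' p' j2"
    if A: "(i', p', j1) \<in> CU" "(i', p', j2) \<in> CU" "j1 \<noteq> j2" "s' i' p' j1 \<noteq> None" for i' p' j1 j2
  proof (cases "i' = i \<and> p' = p")
    case False
    have e: "s' i' p' = s i' p'" using False unfolding s'_def upd_cu_def by auto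
    show ?thesis using A prof_distinct[OF prof, of i' p' j1 j2] unfolding e by simp
  next
    case True
    then have ii: "i' = i" "p' = p" by auto
    have j12: "j1 \<in> {1..K i}" "j2 \<in> {1..K i}" using A(1,2) ii CU_iff by auto
    show ?thesis
    proof (cases "j1 = j")
      case True
      then obtain w where w: "ofres r = Some w" using A(4) ii unfolding s'_def upd_cu_apply by auto
      have e2: "s' i p j2 = s i p j2" using A(3) True unfolding s'_def upd_cu_apply by auto
      have e1: "s' i p j1 = Some w" using True w unfolding s'_def upd_cu_apply by simp
      have "s i p j2 \<noteq> Some w" using new_in[OF w] j12(2) by blast
      then show ?thesis unfolding ii e1 e2 by simp
    next
      case j1: False
      show ?thesis
      proof (cases "j2 = j")
        case True
        have e1: "s' i p j1 = s i p j1" using j1 unfolding s'_def upd_cu_apply by auto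
        have e2: "s' i p j2 = ofres r" using True unfolding s'_def upd_cu_apply by auto
        show ?thesis
        proof (cases "ofres r")
          case None then show ?thesis using e2 A(4) ii by auto
        next
          case (Some w)
          have "s i p j1 \<noteq> Some w" using new_in[OF Some] j12(1) by blast
          then show ?thesis unfolding ii e1 e2 Some by simp
        qed
      next
        case j2: False
        have e: "s' i p j1 = s i p j1" "s' i p j2 = s i p j2" using j1 j2 unfolding s'_def upd_cu_apply by auto
        have "s i p j1 \<noteq> None" using A(4) e ii by simp
        then show ?thesis using prof_distinct[OF prof, of i p j1 j2] A(1,2,3) e ii by simp
      qed
    qed
  qed
  have c3': "\<forall>i' p' j1 j2. (i', p', j1) \<in> CU \<and> (i', p', j2) \<in> CU \<and> j1 \<noteq> j2 \<and> s' i' p' j1 \<noteq> None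
      \<longrightarrow> s' i' p' j1 \<noteq> s' i' p' j2"
  proof (intro allI impI)
    fix i' p' j1 j2 assume "(i', p', j1) \<in> CU \<and> (i', p', j2) \<in> CU \<and> j1 \<noteq> j2 \<and> s' i' p' j1 \<noteq> None"
    then show "s' i' p' j1 \<noteq> s' i' p' j2" using c3[of i' p' j1 j2] by blast
  qed
  show ?thesis unfolding mv cu_profile_def by (intro conjI) (fact c1, fact c2, fact c3')
qed

lemma inst_mv_step:
  assumes prof: "cu_profile N Pi K s" and uC: "u \<in> CU" and rO: "r \<in> Optc s u"
    and gt: "Fc (cellc u) r (Suc (loadc s r)) > Fc (cellc u) (posc s u) (loadc s (posc s u))"
  shows "cu_improvement N Pi mu K c v s (mvc s u r)"
proof -
  obtain i p j where u: "u = (i, p, j)" by (cases u) auto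
  have uC': "(i, p, j) \<in> CU" using uC u by simp
  have rO': "r \<in> Optc s (i, p, j)" using rO u by simp
  have pm: "cell_payoff N Pi mu K c v (mvc s u r) i p = cell_payoff N Pi mu K c v s i p
      + Fc (i, p) r (Suc (loadc s r)) - Fc (i, p) (posc s (i, p, j)) (loadc s (posc s (i, p, j)))"
    using payoff_mv[OF prof uC' rO'] u by simp
  have "cell_payoff N Pi mu K c v (mvc s u r) i p > cell_payoff N Pi mu K c v s i p"
    using pm gt u unfolding cellc_def by simp
  then show ?thesis unfolding cu_improvement_def
    using uC' adm_of_Opt[OF rO'] mvc_eq u by blast
qed

lemma inst_Opt_other:
  assumes "cellc v' \<noteq> cellc u"
  shows "Optc (mvc s u r) v' = Optc s v'"
proof -
  obtain i p j where u: "u = (i, p, j)" by (cases u) auto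
  obtain i' p' j' where v': "v' = (i', p', j')" by (cases v') auto
  have ne: "(i', p') \<noteq> (i, p)" using assms u v' unfolding cellc_def by simp
  have "mvc s u r i' p' = s i' p'" unfolding u mvc_def using ne by (auto simp: upd_cu_def)
  then show ?thesis unfolding v' Optc_def by simp
qed

lemma inst_Opt_sib:
  assumes "cellc v' = cellc u"
  shows "Optc (mvc s u r) v' \<subseteq> insert (posc s u) (Optc s v')"
proof
  obtain i p j where u: "u = (i, p, j)" by (cases u) auto
  obtain j' where v': "v' = (i, p, j')" using assms u unfolding cellc_def by (cases v') auto
  define s' where "s' = upd_cu s i p j (ofres r)"
  have mv: "mvc s u r = s'" unfolding u s'_def mvc_def by simp
  fix e assume e: "e \<in> Optc (mvc s u r) v'"
  show "e \<in> insert (posc s u) (Optc s v')"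
  proof (cases e)
    case (Inl w)
    have wf: "w \<in> p" "\<forall>j''\<in>{1..K i}. s' i p j'' \<noteq> Some w" using e unfolding mv v' Inl Optc_Inl by auto
    show ?thesis
    proof (cases "s i p j = Some w")
      case True then show ?thesis unfolding Inl u posc_def by simp
    next
      case False
      have "\<forall>j''\<in>{1..K i}. s i p j'' \<noteq> Some w"
      proof
        fix j'' assume j'': "j'' \<in> {1..K i}"
        show "s i p j'' \<noteq> Some w"
        proof (cases "j'' = j")
          case True then show ?thesis using False by simp
        next
          case False then show ?thesis using wf(2)[rule_format, OF j''] unfolding s'_def upd_cu_apply by simp
        qed
      qed
      then show ?thesis unfolding Inl v' using wf(1) Optc_Inl by auto
    qed
  next
    case (Inr cp)
    have cp: "cp = (i, p)" and nn: "s' i p j' \<noteq> None" using e unfolding mv v' Inr Optc_Inr by auto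
    show ?thesis
    proof (cases "s i p j' = None")
      case False then show ?thesis unfolding Inr v' cp using Optc_Inr by auto
    next
      case True
      then have "j' = j" using nn unfolding s'_def upd_cu_apply by (auto split: if_splits)
      then show ?thesis unfolding Inr cp u posc_def using True by simp
    qed
  qed
qed

lemma inst_Opt_share:
  assumes "cellc v' = cellc u" "e \<in> Optc s u"
  shows "e \<in> Optc s v' \<or> e = posc s v'"
proof -
  obtain i p j where u: "u = (i, p, j)" by (cases u) auto
  obtain j' where v': "v' = (i, p, j')" using assms u unfolding cellc_def by (cases v') auto
  show ?thesis
  proof (cases e)
    case (Inl w) then show ?thesis using assms(2) by (simp add: u v' Optc_Inl)
  next
    case (Inr cp)
    have cp: "cp = (i, p)" using assms(2) unfolding u Inr Optc_Inr by auto
    show ?thesis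
    proof (cases "s i p j' = None")
      case True then show ?thesis unfolding Inr cp v' posc_def by simp
    next
      case False then show ?thesis unfolding Inr cp v' Optc_Inr by simp
    qed
  qed
qed

lemma inst_finite_Rs: "u \<in> CU \<Longrightarrow> finite (Rsc (cellc u))"
proof -
  assume a: "u \<in> CU"
  obtain i p j where u: "u = (i, p, j)" by (cases u) auto
  have iN: "i \<in> N" and pP: "p \<in> Pi i" using a u CU_iff by auto
  have "finite p" using finite_subset[OF cell_sub[OF iN pP] finOm] .
  then show ?thesis unfolding u Rsc_def cellc_def by simp
qed

lemma inst_ugame: "ugame CU cellc posc loadc Fc Optc mvc (cu_profile N Pi K) Rsc
   (cu_improvement N Pi mu K c v) (best_responding N Pi mu K c v)"
proof (unfold_locales)
  show "finite CU" by (rule finite_CU)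
  show "\<And>u. u \<in> CU \<Longrightarrow> finite (Rsc (cellc u))" by (rule inst_finite_Rs)
  show "\<And>s u. cu_profile N Pi K s \<Longrightarrow> u \<in> CU \<Longrightarrow> posc s u \<in> Rsc (cellc u)" by (rule inst_pos_Rs)
  show "\<And>s u. cu_profile N Pi K s \<Longrightarrow> u \<in> CU \<Longrightarrow> Optc s u \<subseteq> Rsc (cellc u)" by (rule inst_Opt_Rs)
  show "\<And>s u. cu_profile N Pi K s \<Longrightarrow> u \<in> CU \<Longrightarrow> posc s u \<notin> Optc s u" by (rule inst_pos_notin)
  show "\<And>s u. cu_profile N Pi K s \<Longrightarrow> u \<in> CU \<Longrightarrow> 1 \<le> loadc s (posc s u)" by (rule inst_load_pos)
  show "\<And>u r n m. u \<in> CU \<Longrightarrow> r \<in> Rsc (cellc u) \<Longrightarrow> 1 \<le> n \<Longrightarrow> n \<le> m \<Longrightarrow> Fc (cellc u) r m \<le> Fc (cellc u) r n"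
    by (rule inst_F_mono)
  show "\<And>s u. cu_profile N Pi K s \<Longrightarrow> u \<in> CU \<Longrightarrow> best_responding N Pi mu K c v s u =
      (\<forall>q\<in>Optc s u. Fc (cellc u) q (Suc (loadc s q)) \<le> Fc (cellc u) (posc s u) (loadc s (posc s u)))"
    by (rule inst_br_iff)
  show "\<And>s u q. cu_profile N Pi K s \<Longrightarrow> u \<in> CU \<Longrightarrow> q \<in> Optc s u \<Longrightarrow> cu_profile N Pi K (mvc s u q)"
    by (rule inst_mv_valid)
  show "\<And>s u q. cu_profile N Pi K s \<Longrightarrow> u \<in> CU \<Longrightarrow> q \<in> Optc s u \<Longrightarrow>
      Fc (cellc u) (posc s u) (loadc s (posc s u)) < Fc (cellc u) q (Suc (loadc s q)) \<Longrightarrow>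
      cu_improvement N Pi mu K c v s (mvc s u q)"
    by (rule inst_mv_step)
  show "\<And>s u q v'. cu_profile N Pi K s \<Longrightarrow> u \<in> CU \<Longrightarrow> q \<in> Optc s u \<Longrightarrow> v' \<in> CU \<Longrightarrow>
      posc (mvc s u q) v' = (if v' = u then q else posc s v')"
  proof -
    fix s u q v' assume a: "cu_profile N Pi K s" "u \<in> CU" "q \<in> Optc s u" "v' \<in> CU"
    obtain i p j where u: "u = (i, p, j)" by (cases u) auto
    show "posc (mvc s u q) v' = (if v' = u then q else posc s v')"
      using posc_mv[OF a(1)] a(2,3) u by simp
  qed
  show "\<And>s u q r. cu_profile N Pi K s \<Longrightarrow> u \<in> CU \<Longrightarrow> q \<in> Optc s u \<Longrightarrow>
      loadc (mvc s u q) r = (if r = q then Suc (loadc s r) else if r = posc s u then loadc s r - 1 else loadc s r)"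
  proof -
    fix s u q r assume a: "cu_profile N Pi K s" "u \<in> CU" "q \<in> Optc s u"
    obtain i p j where u: "u = (i, p, j)" by (cases u) auto
    show "loadc (mvc s u q) r = (if r = q then Suc (loadc s r) else if r = posc s u then loadc s r - 1 else loadc s r)"
      using load_mv[OF a(1)] a(2,3) u by simp
  qed
  show "\<And>s u q v'. cu_profile N Pi K s \<Longrightarrow> u \<in> CU \<Longrightarrow> q \<in> Optc s u \<Longrightarrow> v' \<in> CU \<Longrightarrow>
      cellc v' \<noteq> cellc u \<Longrightarrow> Optc (mvc s u q) v' = Optc s v'"
    by (rule inst_Opt_other)
  show "\<And>s u q v'. cu_profile N Pi K s \<Longrightarrow> u \<in> CU \<Longrightarrow> q \<in> Optc s u \<Longrightarrow> v' \<in> CU \<Longrightarrow>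
      cellc v' = cellc u \<Longrightarrow> Optc (mvc s u q) v' \<subseteq> insert (posc s u) (Optc s v')"
    by (rule inst_Opt_sib)
  show "\<And>s u v' q. cu_profile N Pi K s \<Longrightarrow> u \<in> CU \<Longrightarrow> v' \<in> CU \<Longrightarrow> v' \<noteq> u \<Longrightarrow>
      cellc v' = cellc u \<Longrightarrow> q \<in> Optc s u \<Longrightarrow> q \<in> Optc s v' \<or> q = posc s v'"
    by (rule inst_Opt_share)
qed

end


theorem lemma1:
  fixes N :: "'i set" and Om :: "'w set" and Pi :: "'i \<Rightarrow> 'w set set"
    and mu :: "'w \<Rightarrow> real" and K :: "'i \<Rightarrow> nat" and c :: "'i \<Rightarrow> nat \<Rightarrow> real"
    and v :: "'i \<Rightarrow> nat \<Rightarrow> 'w \<Rightarrow> real"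
    and B :: "('i \<times> 'w set \<times> nat) set" and a :: "'i \<times> 'w set \<times> nat"
    and s1 :: "('i, 'w) cu_profile"
  assumes "search_game N Om Pi mu K c v"
    and "B \<subseteq> cell_units N Pi K"
    and "a \<in> cell_units N Pi K"
    and "a \<notin> B"
    and "cu_profile N Pi K s1"
    and "\<forall>b\<in>B. best_responding N Pi mu K c v s1 b"
  shows "\<exists>(T::nat) (seq :: nat \<Rightarrow> ('i, 'w) cu_profile).
           seq 0 = s1 \<and>
           (\<forall>t<T. cu_improvement N Pi mu K c v (seq t) (seq (Suc t))) \<and>
           (\<forall>b\<in>B \<union> {a}. best_responding N Pi mu K c v (seq T) b)"
proof -
  interpret sg N Om Pi mu K c v by (rule sg.intro) (rule assms(1))
  interpret G: ugame_run "cell_units N Pi K" cellc posc loadc Fc Optc mvc "cu_profile N Pi K" Rsc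
      "cu_improvement N Pi mu K c v" "best_responding N Pi mu K c v" s1 "B \<union> {a}" a
  proof (rule ugame_run.intro[OF inst_ugame])
    show "ugame_run_axioms (cell_units N Pi K) (cu_profile N Pi K) s1 (B \<union> {a}) a"
      unfolding ugame_run_axioms_def using assms(2,3,5) by auto
  qed
  have "G.goal s1"
    by (rule G.main_abs) (use assms(4,6) in auto)
  then obtain s' where st: "(cu_improvement N Pi mu K c v)\<^sup>*\<^sup>* s1 s'"
    and br: "\<forall>u\<in>B \<union> {a}. best_responding N Pi mu K c v s' u"
    unfolding G.goal_def by blast
  obtain n where "(cu_improvement N Pi mu K c v ^^ n) s1 s'" using rtranclp_imp_relpowp[OF st] by blast
  then obtain f where f: "f 0 = s1" "f n = s'" "\<forall>i<n. cu_improvement N Pi mu K c v (f i) (f (Suc i))"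
    unfolding relpowp_fun_conv by blast
  show ?thesis using f br by blast
qed

end
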